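(* Let $\theta\in(\pi,2\pi)$. Then for all $x,y\in S_\theta$, $$(\pi/\theta)\,s_{S_\theta}(x,y)\le{\rm th}(\rho_{S_\theta}(x,y)/2)\le s_{S_\theta}(x,y),$$ and this inequality is sharp.
   Context: $S_\theta=\{x\in\mathbb{C}:0<\arg(x)<\theta\}$. For a domain $G\subsetneq\mathbb{C}$, $s_G(x,y)=\frac{|x-y|}{\inf_{z\in\partial G}(|x-z|+|z-y|)}$. The hyperbolic metric of $\mathbb{H}^2=\{z:{\rm Im}\,z>0\}$ satisfies ${\rm th}(\rho_{\mathbb{H}^2}(u,v)/2)=|u-v|/|u-\overline{v}|$, and $\rho_{S_\theta}(x,y)=\rho_{\mathbb{H}^2}(x^{\pi/\theta},y^{\pi/\theta})$ (principal branch power, a conformal map of $S_\theta$ onto $\mathbb{H}^2$). *)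

theory Defs
  imports "HOL-Analysis.Analysis"
begin

definition arg2pi :: "complex \<Rightarrow> real" where
  "arg2pi z = (if 0 \<le> Arg z then Arg z else Arg z + 2 * pi)"

definition sector :: "real \<Rightarrow> complex set" where
  "sector \<theta> = {z. z \<noteq> 0 \<and> 0 < arg2pi z \<and> arg2pi z < \<theta>}"

text \<open>Power z^a with the branch of arg in [0, 2 pi); maps S_theta onto the
  upper half-plane for a = pi / theta.\<close>
definition cpow :: "complex \<Rightarrow> real \<Rightarrow> complex" where
  "cpow z a = complex_of_real (cmod z powr a) * cis (a * arg2pi z)"

text \<open>Hyperbolic metric of the upper half-plane: th(rho/2) = |u-v|/|u - conj v|.\<close>
definition rho_H :: "complex \<Rightarrow> complex \<Rightarrow> real" where
  "rho_H u v = 2 * artanh (cmod (u - v) / cmod (u - cnj v))"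

definition rho_sector :: "real \<Rightarrow> complex \<Rightarrow> complex \<Rightarrow> real" where
  "rho_sector \<theta> x y = rho_H (cpow x (pi / \<theta>)) (cpow y (pi / \<theta>))"

definition s_metric :: "complex set \<Rightarrow> complex \<Rightarrow> complex \<Rightarrow> real" where
  "s_metric G x y = cmod (x - y) / Inf ((\<lambda>z. cmod (x - z) + cmod (z - y)) ` frontier G)"

end

theory Submission
  imports Defs "HOL-Analysis.Analysis"
begin

lemma sin_ge_lin:
  fixes a x :: real
  assumes "0 \<le> a" "a \<le> 1" "0 \<le> x" "x \<le> pi"
  shows "a * sin x \<le> sin (a * x)"
proof -
  have "(\<lambda>t. sin (a*t) - a * sin t) 0 \<le> (\<lambda>t. sin (a*t) - a * sin t) x"
  proof (rule DERIV_nonneg_imp_increasing_open[OF assms(3)])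
    fix t assume t: "0 < t" "t < x"
    show "\<exists>y. ((\<lambda>t. sin (a*t) - a * sin t) has_real_derivative y) (at t) \<and> 0 \<le> y"
    proof (intro exI conjI)
      show "((\<lambda>t. sin (a*t) - a * sin t) has_real_derivative (a * cos (a*t) - a * cos t)) (at t)"
        by (auto intro!: derivative_eq_intros)
      have "cos t \<le> cos (a*t)"
        using t assms by (intro cos_monotone_0_pi_le) (auto simp: mult_left_le_one_le)
      then show "0 \<le> a * cos (a*t) - a * cos t"
        using assms by (simp add: right_diff_distrib[symmetric])
    qed
  next
    show "continuous_on {0..x} (\<lambda>t. sin (a*t) - a * sin t)"
      by (intro continuous_intros)
  qed
  then show ?thesis by simp
qed

lemma sinh_le_lin:
  fixes a t :: real
  assumes "0 \<le> a" "a \<le> 1" "0 \<le> t"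
  shows "sinh (a * t) \<le> a * sinh t"
proof -
  have "(\<lambda>u. a * sinh u - sinh (a*u)) 0 \<le> (\<lambda>u. a * sinh u - sinh (a*u)) t"
  proof (rule DERIV_nonneg_imp_increasing_open[OF assms(3)])
    fix u assume u: "0 < u" "u < t"
    show "\<exists>y. ((\<lambda>u. a * sinh u - sinh (a*u)) has_real_derivative y) (at u) \<and> 0 \<le> y"
    proof (intro exI conjI)
      show "((\<lambda>u. a * sinh u - sinh (a*u)) has_real_derivative (a * cosh u - a * cosh (a*u))) (at u)"
        by (auto intro!: derivative_eq_intros)
      have "cosh (a*u) \<le> cosh u"
        using u assms by (subst cosh_real_nonneg_le_iff) (auto simp: mult_left_le_one_le)
      then show "0 \<le> a * cosh u - a * cosh (a*u)"
        using assms by (simp add: right_diff_distrib[symmetric])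
    qed
  next
    show "continuous_on {0..t} (\<lambda>u. a * sinh u - sinh (a*u))"
      by (intro continuous_intros)
  qed
  then show ?thesis by simp
qed

lemma tanh_ge_lin:
  fixes a t :: real
  assumes "0 \<le> a" "a \<le> 1" "0 \<le> t"
  shows "a * tanh t \<le> tanh (a * t)"
proof -
  have "(\<lambda>u. tanh (a*u) - a * tanh u) 0 \<le> (\<lambda>u. tanh (a*u) - a * tanh u) t"
  proof (rule DERIV_nonneg_imp_increasing_open[OF assms(3)])
    fix u assume u: "0 < u" "u < t"
    show "\<exists>y. ((\<lambda>u. tanh (a*u) - a * tanh u) has_real_derivative y) (at u) \<and> 0 \<le> y"
    proof (intro exI conjI)
      show "((\<lambda>u. tanh (a*u) - a * tanh u) has_real_derivative
              ((1 - tanh (a*u) ^ 2) * a - a * (1 - tanh u ^ 2))) (at u)"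
        by (auto intro!: derivative_eq_intros)
      have "tanh (a*u) \<le> tanh u" using u assms by (auto simp: mult_left_le_one_le)
      moreover have "0 \<le> tanh (a*u)" using u assms by auto
      ultimately have "tanh (a*u) ^ 2 \<le> tanh u ^ 2" by (intro power_mono) auto
      then have "a * tanh (a*u) ^ 2 \<le> a * tanh u ^ 2" using assms by (intro mult_left_mono) auto
      then show "0 \<le> (1 - tanh (a*u) ^ 2) * a - a * (1 - tanh u ^ 2)"
        by (simp add: algebra_simps)
    qed
  next
    show "continuous_on {0..t} (\<lambda>u. tanh (a*u) - a * tanh u)"
      by (intro continuous_intros) auto
  qed
  then show ?thesis by simp
qed

lemma sin_ratio_aux:
  fixes a x :: real
  assumes "0 \<le> a" "a \<le> 1" "0 \<le> x" "x \<le> pi"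
  shows "sin (a*x) * cos x \<le> a * cos (a*x) * sin x"
proof -
  have "(\<lambda>t. a * cos (a*t) * sin t - sin (a*t) * cos t) 0 \<le> (\<lambda>t. a * cos (a*t) * sin t - sin (a*t) * cos t) x"
  proof (rule DERIV_nonneg_imp_increasing_open[OF assms(3)])
    fix t assume t: "0 < t" "t < x"
    show "\<exists>y. ((\<lambda>t. a * cos (a*t) * sin t - sin (a*t) * cos t) has_real_derivative y) (at t) \<and> 0 \<le> y"
    proof (intro exI conjI)
      show "((\<lambda>t. a * cos (a*t) * sin t - sin (a*t) * cos t) has_real_derivative
         (a * (- sin (a*t) * a) * sin t + a * cos (a*t) * cos t - (cos (a*t) * a * cos t + sin (a*t) * (- sin t)))) (at t)"
        by (auto intro!: derivative_eq_intros)
      have "a*t \<le> t" using t assms by (simp add: mult_left_le_one_le)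
      then have "a*t \<le> pi" using t assms by linarith
      then have "0 \<le> sin (a*t)" using t assms by (intro sin_ge_zero) auto
      moreover have "0 \<le> sin t" using t assms by (intro sin_ge_zero) auto
      moreover have "0 \<le> 1 - a*a" using assms by (simp add: mult_le_one)
      ultimately have "0 \<le> (1 - a*a) * (sin (a*t) * sin t)" by simp
      then show "0 \<le> a * (- sin (a*t) * a) * sin t + a * cos (a*t) * cos t - (cos (a*t) * a * cos t + sin (a*t) * (- sin t))"
        by (simp add: algebra_simps)
    qed
  next
    show "continuous_on {0..x} (\<lambda>t. a * cos (a*t) * sin t - sin (a*t) * cos t)"
      by (intro continuous_intros)
  qed
  then show ?thesis by simp
qed

lemma sin_ratio_mono:
  fixes a x y :: real
  assumes "0 \<le> a" "a \<le> 1" "0 \<le> x" "x \<le> y" "y < pi"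
  shows "sin (a*x) * sin y \<le> sin (a*y) * sin x"
proof (cases "x = 0")
  case True
  have "0 \<le> sin (a*y)" using assms by (intro sin_ge_zero) (auto simp: mult_left_le_one_le order_trans[of _ y pi])
  then show ?thesis using True by simp
next
  case False
  have "(\<lambda>t. sin (a*t) / sin t) x \<le> (\<lambda>t. sin (a*t) / sin t) y"
  proof (rule DERIV_nonneg_imp_increasing_open[OF assms(4)])
    fix t assume t: "x < t" "t < y"
    have st: "0 < sin t" using t assms by (intro sin_gt_zero) auto
    show "\<exists>z. ((\<lambda>t. sin (a*t) / sin t) has_real_derivative z) (at t) \<and> 0 \<le> z"
    proof (intro exI conjI)
      show "((\<lambda>t. sin (a*t) / sin t) has_real_derivative
         ((cos (a*t) * a * sin t - sin (a*t) * cos t) / (sin t * sin t))) (at t)"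
        using st by (auto intro!: derivative_eq_intros simp: power2_eq_square)
      have "sin (a*t) * cos t \<le> a * cos (a*t) * sin t"
        using t assms by (intro sin_ratio_aux) auto
      then show "0 \<le> (cos (a*t) * a * sin t - sin (a*t) * cos t) / (sin t * sin t)"
        by (intro divide_nonneg_nonneg) (auto simp: algebra_simps)
    qed
  next
    have "\<forall>t\<in>{x..y}. sin t \<noteq> 0"
    proof
      fix t assume "t \<in> {x..y}"
      then have "0 < t" "t < pi" using assms False by auto
      then show "sin t \<noteq> 0" using sin_gt_zero by force
    qed
    then show "continuous_on {x..y} (\<lambda>t. sin (a*t) / sin t)"
      by (intro continuous_intros) auto
  qed
  moreover have "0 < sin x" "0 < sin y" using assms False by (auto intro!: sin_gt_zero)
  ultimately show ?thesis by (simp add: field_simps)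
qed

lemma sin_sq_diff_mono:
  fixes a x y :: real
  assumes "0 \<le> a" "a \<le> 1" "0 \<le> x" "x \<le> y" "y \<le> pi/2"
  shows "sin (a*x)^2 - a^2 * sin x ^2 \<le> sin (a*y)^2 - a^2 * sin y ^2"
proof -
  have "(\<lambda>t. sin (a*t)^2 - a^2 * sin t ^2) x \<le> (\<lambda>t. sin (a*t)^2 - a^2 * sin t ^2) y"
  proof (rule DERIV_nonneg_imp_increasing_open[OF assms(4)])
    fix t assume t: "x < t" "t < y"
    show "\<exists>z. ((\<lambda>t. sin (a*t)^2 - a^2 * sin t ^2) has_real_derivative z) (at t) \<and> 0 \<le> z"
    proof (intro exI conjI)
      show "((\<lambda>t. sin (a*t)^2 - a^2 * sin t ^2) has_real_derivative
         (2 * sin (a*t) * (cos (a*t) * a) - a^2 * (2 * sin t * cos t))) (at t)"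
        by (auto intro!: derivative_eq_intros)
      have aa: "a*(2*t) = 2*(a*t)" by simp
      have s1: "sin (a*(2*t)) = 2 * sin (a*t) * cos (a*t)" by (simp only: aa sin_double)
      have e: "2 * sin (a*t) * (cos (a*t) * a) - a^2 * (2 * sin t * cos t) = a * sin (a*(2*t)) - a^2 * sin (2*t)"
        unfolding s1 sin_double by (simp add: power2_eq_square algebra_simps)
      have "a * sin (2*t) \<le> sin (a*(2*t))" using t assms by (intro sin_ge_lin) auto
      then have "a * (a * sin (2*t)) \<le> a * sin (a*(2*t))" using assms by (intro mult_left_mono) auto
      then show "0 \<le> 2 * sin (a*t) * (cos (a*t) * a) - a^2 * (2 * sin t * cos t)"
        unfolding e by (simp add: power2_eq_square)
    qed
  next
    show "continuous_on {x..y} (\<lambda>t. sin (a*t)^2 - a^2 * sin t ^2)"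
      by (intro continuous_intros)
  qed
  then show ?thesis by simp
qed
lemma lower_alg:
  fixes a X X' B B' C C' :: real
  assumes "0 \<le> a" "a \<le> 1" "0 \<le> X" "0 \<le> X'" "X' \<le> a^2 * X"
    "a^2 * X \<le> X' * (1 + (1 - a^2) * X)" "0 \<le> B" "C \<le> 1" "C' \<le> C" "a^2 * B \<le> B'" "0 \<le> C'"
  shows "a^2 * ((X + B) * (X' + C')) \<le> (X' + B') * (X + C)"
proof -
  have a2: "a^2 \<le> 1" "0 \<le> a^2" using assms by (auto simp: power_le_one)
  have C0: "0 \<le> C" using assms by linarith
  have d: "(X' + B') * (X + C) - a^2 * ((X + B) * (X' + C')) =
     (1 - a^2) * X * X' + C * (X' - a^2 * X) + a^2 * X * (C - C') + (B' * X - a^2 * B * X') + (B' * C - a^2 * B * C')"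
    by (simp add: algebra_simps)
  have "C * (X' - a^2 * X) \<ge> X' - a^2 * X"
  proof -
    have "(1 - C) * (X' - a^2 * X) \<le> 0" using assms by (intro mult_nonneg_nonpos) auto
    then show ?thesis by (simp add: algebra_simps)
  qed
  moreover have "X' - a^2 * X \<ge> - ((1 - a^2) * X * X')" using assms by (simp add: algebra_simps)
  moreover have "a^2 * X * (C - C') \<ge> 0" using assms a2 by simp
  moreover have "B' * X - a^2 * B * X' \<ge> 0"
  proof -
    have "X' \<le> X" using assms a2 by (meson mult_left_le_one_le order_trans)
    then have "a^2 * B * X' \<le> a^2 * B * X" using assms a2 by (intro mult_left_mono) auto
    also have "\<dots> \<le> B' * X" using assms by (intro mult_right_mono) auto
    finally show ?thesis by simp
  qed
  moreover have "B' * C - a^2 * B * C' \<ge> 0"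
  proof -
    have "a^2 * B * C' \<le> a^2 * B * C" using assms a2 by (intro mult_left_mono) auto
    also have "\<dots> \<le> B' * C" using assms C0 by (intro mult_right_mono) auto
    finally show ?thesis by simp
  qed
  ultimately show ?thesis using d by linarith
qed

lemma upper_alg:
  fixes a X X' B B' C C' :: real
  assumes "0 \<le> X" "X' \<le> a^2 * X" "B \<le> C" "0 \<le> C' - B' + a^2 * (B - C)" "B' * C \<le> B * C'"
  shows "(X' + B') * (X + C) \<le> (X + B) * (X' + C')"
proof -
  have d: "(X + B) * (X' + C') - (X' + B') * (X + C) = X * (C' - B') + X' * (B - C) + (B * C' - B' * C)"
    by (simp add: algebra_simps)
  have "X' * (B - C) \<ge> a^2 * X * (B - C)" using assms by (intro mult_right_mono_neg) auto
  moreover have "X * (C' - B' + a^2 * (B - C)) \<ge> 0" using assms by simp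
  ultimately show ?thesis using d assms by (simp add: algebra_simps)
qed

lemma sinh_sq_exp: "sinh (x::real) ^ 2 = (exp (2*x) + exp (-(2*x)) - 2) / 4"
proof -
  have "sinh x ^ 2 = ((exp x - exp (-x)) / 2) ^ 2" by (simp add: sinh_def)
  also have "\<dots> = (exp x * exp x + exp (-x) * exp (-x) - 2 * (exp x * exp (-x))) / 4"
    by (simp add: power2_eq_square algebra_simps divide_simps)
  also have "exp x * exp x = exp (2*x)" by (simp add: exp_add[symmetric])
  also have "exp (-x) * exp (-x) = exp (-(2*x))" by (simp add: exp_add[symmetric])
  also have "exp x * exp (-x) = 1" by (simp add: exp_minus)
  finally show ?thesis by simp
qed

lemma sinh_sq_ratio:
  fixes r p a :: real
  assumes "0 < r" "0 < p"
  shows "sinh (a * (ln (p / r) / 2)) ^ 2 = (p powr a - r powr a)^2 / (4 * (r powr a * p powr a))"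
proof -
  have l: "2 * (a * (ln (p / r) / 2)) = a * ln p - a * ln r" using assms by (simp add: ln_div field_simps)
  have l2: "-(2 * (a * (ln (p / r) / 2))) = a * ln r - a * ln p" using assms by (simp add: ln_div field_simps)
  have e1: "exp (2 * (a * (ln (p / r) / 2))) = p powr a / r powr a"
    using assms unfolding l by (simp add: powr_def exp_diff)
  have e2: "exp (-(2 * (a * (ln (p / r) / 2)))) = r powr a / p powr a"
    using assms unfolding l2 by (simp add: powr_def exp_diff)
  have "r powr a > 0" "p powr a > 0" using assms by auto
  then show ?thesis unfolding sinh_sq_exp e1 e2
    by (simp add: field_simps power2_eq_square)
qed

lemma hyp_facts:
  fixes r p a :: real
  assumes "0 < r" "0 < p" "0 \<le> a" "a \<le> 1"
  defines "X \<equiv> (p - r)^2 / (4 * (r * p))"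
  defines "X' \<equiv> (p powr a - r powr a)^2 / (4 * (r powr a * p powr a))"
  shows "X' \<le> a^2 * X" "a^2 * X \<le> X' * (1 + (1 - a^2) * X)" "0 \<le> X" "0 \<le> X'"
proof -
  define t where "t = \<bar>ln (p / r) / 2\<bar>"
  have t0: "0 \<le> t" by (simp add: t_def)
  have sq: "\<And>c. sinh (c * t) ^ 2 = sinh (c * (ln (p / r) / 2)) ^ 2"
    unfolding t_def by (cases "ln (p / r) / 2 \<ge> 0") (auto simp: abs_if)
  have XX: "X = sinh t ^ 2" using sq[of 1] sinh_sq_ratio[OF assms(1,2), of 1] assms
    by (simp add: X_def)
  have XX': "X' = sinh (a*t) ^ 2" using sq[of a] sinh_sq_ratio[OF assms(1,2), of a]
    by (simp add: X'_def)
  have h1: "sinh (a*t) \<le> a * sinh t" by (rule sinh_le_lin) (use assms t0 in auto)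
  have h0: "0 \<le> sinh (a*t)" using assms t0 by simp
  show "X' \<le> a^2 * X" unfolding XX XX'
    using power_mono[OF h1 h0, of 2] by (simp add: power_mult_distrib)
  show "0 \<le> X" "0 \<le> X'" unfolding XX XX' by auto
  have th: "a * tanh t \<le> tanh (a*t)" by (rule tanh_ge_lin) (use assms t0 in auto)
  define S where "S = sinh t"
  define s where "s = sinh (a*t)"
  define Cc where "Cc = cosh t"
  define c where "c = cosh (a*t)"
  have pos: "0 < Cc" "0 < c" "0 \<le> S" "0 \<le> s" using t0 assms by (auto simp: S_def s_def Cc_def c_def)
  have "a * (S / Cc) \<le> s / c" using th by (simp add: tanh_def S_def s_def Cc_def c_def)
  then have "a * S * c \<le> s * Cc" using pos by (simp add: field_simps)
  then have "(a * S * c)^2 \<le> (s * Cc)^2" using pos assms by (intro power_mono) auto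
  moreover have "Cc^2 = 1 + S^2" "c^2 = 1 + s^2" unfolding S_def s_def Cc_def c_def
    by (simp_all add: cosh_square_eq)
  ultimately have "a^2 * S^2 * (1 + s^2) \<le> s^2 * (1 + S^2)" by (simp add: power_mult_distrib)
  then show "a^2 * X \<le> X' * (1 + (1 - a^2) * X)" unfolding XX XX' S_def[symmetric] s_def[symmetric]
    by (simp add: algebra_simps)
qed
definition lc :: "real \<Rightarrow> real \<Rightarrow> real \<Rightarrow> real" where
  "lc r p g = r^2 + p^2 - 2*r*p*cos g"
definition m0 :: "real \<Rightarrow> real" where
  "m0 \<phi> = (if \<phi> \<le> pi then \<phi> else 2*pi - \<phi>)"
definition gam :: "real \<Rightarrow> real \<Rightarrow> real" where
  "gam \<alpha> \<beta> = min pi (m0 \<alpha> + m0 \<beta>)"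

lemma sinsq_mono:
  fixes x y :: real
  assumes "0 \<le> x" "x \<le> y" "y \<le> pi/2"
  shows "sin x ^ 2 \<le> sin y ^ 2"
proof -
  have "sin x \<le> sin y" using assms by (intro sin_monotone_2pi_le) auto
  moreover have "0 \<le> sin x" using assms by (intro sin_ge_zero) auto
  ultimately show ?thesis by (intro power_mono) auto
qed

lemma sinsq_abs: "sin (\<bar>x\<bar>::real) ^ 2 = sin x ^ 2"
  by (cases "x \<ge> 0") auto

lemma sinsq_le1: "sin (x::real) ^ 2 \<le> 1"
  using abs_sin_le_one[of x] by (simp add: abs_square_le_1)

lemma sin_half_ge:
  fixes a :: real
  assumes "0 \<le> a" "a \<le> 1"
  shows "a \<le> sin (a * (pi/2))"
  using sin_ge_lin[OF assms, of "pi/2"] by simp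

lemma Bp_ge:
  fixes a d :: real
  assumes "0 \<le> a" "a \<le> 1" "\<bar>d\<bar> \<le> 2*pi"
  shows "a^2 * sin (d/2) ^ 2 \<le> sin (a*d/2) ^ 2"
proof -
  have "a * sin (\<bar>d\<bar>/2) \<le> sin (a * (\<bar>d\<bar>/2))" using assms by (intro sin_ge_lin) auto
  moreover have "0 \<le> a * sin (\<bar>d\<bar>/2)" using assms by (intro mult_nonneg_nonneg sin_ge_zero) auto
  ultimately have "(a * sin (\<bar>d\<bar>/2))^2 \<le> sin (a * (\<bar>d\<bar>/2))^2" by (intro power_mono) auto
  moreover have "sin (\<bar>d\<bar>/2) ^2 = sin (d/2)^2" using sinsq_abs[of "d/2"] by simp
  moreover have "sin (a * (\<bar>d\<bar>/2))^2 = sin (a*d/2)^2" using sinsq_abs[of "a*d/2"] assms by (simp add: abs_mult)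
  ultimately show ?thesis by (simp add: power_mult_distrib)
qed

lemma lower_trig:
  fixes a \<alpha> \<beta> :: real
  assumes a: "1/2 < a" "a < 1" and al: "0 < \<alpha>" "\<alpha> < pi/a" and be: "0 < \<beta>" "\<beta> < pi/a"
    and nc: "\<bar>\<alpha> - \<beta>\<bar> < pi"
  shows "sin (a*(\<alpha>+\<beta>)/2) ^ 2 \<le> sin (gam \<alpha> \<beta> / 2) ^ 2"
proof -
  have th: "pi < pi/a" "pi/a < 2*pi" using a by (auto simp: field_simps)
  have aal: "a*\<alpha> < pi" "a*\<beta> < pi" using al be a by (auto simp: field_simps)
  show ?thesis
  proof (cases "\<alpha> \<le> pi \<and> \<beta> \<le> pi")
    case True
    show ?thesis
    proof (cases "\<alpha> + \<beta> \<le> pi")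
      case True2: True
      then have g: "gam \<alpha> \<beta> = \<alpha> + \<beta>" using True by (simp add: gam_def m0_def)
      have "a*(\<alpha>+\<beta>)/2 \<le> (\<alpha>+\<beta>)/2" using a al be by (simp add: mult_left_le_one_le)
      then show ?thesis unfolding g using True2 a al be
        by (intro sinsq_mono) auto
    next
      case False
      then have g: "gam \<alpha> \<beta> = pi" using True by (simp add: gam_def m0_def)
      show ?thesis unfolding g by (simp add: sinsq_le1)
    qed
  next
    case False
    show ?thesis
    proof (cases "\<alpha> \<le> pi \<or> \<beta> \<le> pi")
      case True
      then have g: "gam \<alpha> \<beta> = pi" using False nc by (auto simp: gam_def m0_def)
      show ?thesis unfolding g by (simp add: sinsq_le1)
    next
      case False2: False
      show ?thesis
      proof (cases "4*pi - (\<alpha>+\<beta>) \<ge> pi")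
        case True
        then have g: "gam \<alpha> \<beta> = pi" using False2 by (auto simp: gam_def m0_def)
        show ?thesis unfolding g by (simp add: sinsq_le1)
      next
        case False3: False
        then have g: "gam \<alpha> \<beta> = 4*pi - (\<alpha>+\<beta>)" using False2 by (auto simp: gam_def m0_def)
        define \<tau> where "\<tau> = 2*pi - (\<alpha>+\<beta>)/2"
        have g2: "gam \<alpha> \<beta> / 2 = \<tau>" unfolding g \<tau>_def by (simp add: field_simps)
        have t1: "0 < \<tau>" "\<tau> \<le> pi/2" using False3 al be th unfolding \<tau>_def by auto
        have e: "sin (a*(\<alpha>+\<beta>)/2) = sin (pi - a*(\<alpha>+\<beta>)/2)" by simp
        have p1: "0 \<le> pi - a*(\<alpha>+\<beta>)/2" using aal by (simp add: distrib_left)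
        have "pi - a*(\<alpha>+\<beta>)/2 = a * (pi/a - (\<alpha>+\<beta>)/2)" using a by (simp add: field_simps)
        also have "\<dots> \<le> pi/a - (\<alpha>+\<beta>)/2" using a al be
          by (intro mult_left_le_one_le) (auto simp: field_simps)
        also have "\<dots> \<le> \<tau>" using th unfolding \<tau>_def by simp
        finally have p2: "pi - a*(\<alpha>+\<beta>)/2 \<le> \<tau>" .
        show ?thesis unfolding g2 e using p1 p2 t1 by (intro sinsq_mono) auto
      qed
    qed
  qed
qed

lemma lower_trig_cross:
  fixes a \<alpha> \<beta> :: real
  assumes a: "1/2 < a" "a < 1" and al: "0 < \<alpha>" "\<alpha> < pi/a" and be: "0 < \<beta>" "\<beta> < pi/a"
    and cr: "pi \<le> \<bar>\<alpha> - \<beta>\<bar>"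
  shows "a^2 * sin (a*(\<alpha>+\<beta>)/2) ^ 2 \<le> sin (a*(\<alpha>-\<beta>)/2) ^ 2"
proof -
  define d where "d = \<bar>\<alpha> - \<beta>\<bar>"
  have d1: "a * (pi/2) \<le> a * d / 2" using cr a unfolding d_def by simp
  have d2: "a * d / 2 \<le> pi/2"
  proof -
    have "d < pi/a" using al be unfolding d_def by auto
    then have "a * d < pi" using a by (simp add: field_simps)
    then show ?thesis by simp
  qed
  have s1: "a \<le> sin (a*(pi/2))" using a by (intro sin_half_ge) auto
  have "0 \<le> a*(pi/2)" using a by simp
  then have d0: "-(pi/2) \<le> a*(pi/2)" using pi_gt_zero by linarith
  have s2: "sin (a*(pi/2)) \<le> sin (a*d/2)"
    by (rule sin_monotone_2pi_le[OF d0 d1]) (use d2 in simp)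
  have "a \<le> sin (a*d/2)" using s1 s2 by linarith
  then have "a^2 \<le> sin (a*d/2)^2" using a by (intro power_mono) auto
  moreover have "sin (a*d/2)^2 = sin (a*(\<alpha>-\<beta>)/2)^2" unfolding d_def
    using sinsq_abs[of "a*(\<alpha>-\<beta>)/2"] a by (simp add: abs_mult)
  moreover have "a^2 * sin (a*(\<alpha>+\<beta>)/2) ^ 2 \<le> a^2" by (rule mult_right_le_one_le) (auto simp: sinsq_le1)
  ultimately show ?thesis by linarith
qed

lemma upper_trig_refl:
  fixes a d sg :: real
  assumes "0 \<le> a" "a \<le> 1" "\<bar>d\<bar> \<le> sg" "sg \<le> pi"
  defines "B \<equiv> sin (d/2)^2" and "B' \<equiv> sin (a*d/2)^2" and "C \<equiv> sin (sg/2)^2" and "C' \<equiv> sin (a * sg/2)^2"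
  shows "B \<le> C" "0 \<le> C' - B' + a^2 * (B - C)" "B' * C \<le> B * C'"
proof -
  have B: "B = sin (\<bar>d\<bar>/2)^2" unfolding B_def using sinsq_abs[of "d/2"] by simp
  have B': "B' = sin (a*(\<bar>d\<bar>/2))^2" unfolding B'_def using sinsq_abs[of "a*d/2"] assms by (simp add: abs_mult)
  have C': "C' = sin (a*(sg/2))^2" unfolding C'_def by simp
  have d0: "0 \<le> \<bar>d\<bar>/2" "\<bar>d\<bar>/2 \<le> sg/2" "sg/2 \<le> pi/2" using assms by auto
  have sp: "sg/2 < pi" using d0 pi_gt_zero by linarith
  show "B \<le> C" unfolding B C_def using d0 by (intro sinsq_mono) auto
  have "sin (a*(\<bar>d\<bar>/2))^2 - a^2 * sin (\<bar>d\<bar>/2) ^2 \<le> sin (a*(sg/2))^2 - a^2 * sin (sg/2) ^2"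
    by (rule sin_sq_diff_mono[OF assms(1,2) d0])
  then show "0 \<le> C' - B' + a^2 * (B - C)" unfolding B B' C' C_def by (simp add: algebra_simps)
  have "sin (a*(\<bar>d\<bar>/2)) * sin (sg/2) \<le> sin (a*(sg/2)) * sin (\<bar>d\<bar>/2)"
    by (rule sin_ratio_mono[OF assms(1,2) d0(1,2) sp])
  moreover have "0 \<le> sin (a*(\<bar>d\<bar>/2)) * sin (sg/2)"
  proof -
    have "a*(\<bar>d\<bar>/2) \<le> \<bar>d\<bar>/2" using assms d0 by (simp add: mult_left_le_one_le)
    then have "a*(\<bar>d\<bar>/2) \<le> pi" using d0 pi_gt_zero by linarith
    moreover have "0 \<le> a*(\<bar>d\<bar>/2)" using assms by simp
    moreover have "0 \<le> sin (sg/2)" using d0 sp by (intro sin_ge_zero) auto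
    ultimately show ?thesis by (simp add: sin_ge_zero)
  qed
  ultimately have "(sin (a*(\<bar>d\<bar>/2)) * sin (sg/2))^2 \<le> (sin (a*(sg/2)) * sin (\<bar>d\<bar>/2))^2"
    by (intro power_mono) auto
  then show "B' * C \<le> B * C'" unfolding B B' C' C_def by (simp add: power_mult_distrib algebra_simps)
qed

lemma upper_trig_vertex:
  fixes a d w :: real
  assumes "0 \<le> a" "a \<le> 1" "\<bar>d\<bar> \<le> pi" "a*(pi/2) \<le> w" "w \<le> pi - a*(pi/2)"
  defines "B \<equiv> sin (d/2)^2" and "B' \<equiv> sin (a*d/2)^2" and "C' \<equiv> sin w^2"
  shows "B \<le> 1" "0 \<le> C' - B' + a^2 * (B - 1)" "B' \<le> B * C'"
proof -
  have B: "B = sin (\<bar>d\<bar>/2)^2" unfolding B_def using sinsq_abs[of "d/2"] by simp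
  have B': "B' = sin (a*(\<bar>d\<bar>/2))^2" unfolding B'_def using sinsq_abs[of "a*d/2"] assms by (simp add: abs_mult)
  show "B \<le> 1" unfolding B_def by (rule sinsq_le1)
  have ap: "a*(pi/2) \<le> pi/2" using assms by (simp add: mult_left_le_one_le)
  have "0 \<le> a*(pi/2)" using assms by simp
  then have ap0: "-(pi/2) \<le> a*(pi/2)" using pi_gt_zero by linarith
  have d0: "0 \<le> \<bar>d\<bar>/2" "\<bar>d\<bar>/2 \<le> pi/2" using assms by auto
  have sw: "sin (a*(pi/2)) \<le> sin w"
  proof (cases "w \<le> pi/2")
    case True
    then show ?thesis by (rule sin_monotone_2pi_le[OF ap0 assms(4)])
  next
    case False
    have "sin (a*(pi/2)) \<le> sin (pi - w)"
      by (rule sin_monotone_2pi_le[OF ap0]) (use assms False in linarith)+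
    then show ?thesis by simp
  qed
  have s0: "0 \<le> sin (a*(pi/2))" using ap \<open>0 \<le> a*(pi/2)\<close> pi_gt_zero by (intro sin_ge_zero) auto
  have C'ge: "sin (a*(pi/2))^2 \<le> C'" unfolding C'_def using sw s0 by (intro power_mono) auto
  have "sin (a*(\<bar>d\<bar>/2))^2 - a^2 * sin (\<bar>d\<bar>/2) ^2 \<le> sin (a*(pi/2))^2 - a^2 * sin (pi/2) ^2"
    by (rule sin_sq_diff_mono[OF assms(1,2) d0 order_refl])
  then have "sin (a*(\<bar>d\<bar>/2))^2 - a^2 * sin (\<bar>d\<bar>/2) ^2 \<le> C' - a^2" using C'ge by simp
  then show "0 \<le> C' - B' + a^2 * (B - 1)" unfolding B B' by (simp add: right_diff_distrib)
  have sp: "pi/2 < pi" using pi_gt_zero by linarith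
  have "sin (a*(\<bar>d\<bar>/2)) * sin (pi/2) \<le> sin (a*(pi/2)) * sin (\<bar>d\<bar>/2)"
    by (rule sin_ratio_mono[OF assms(1,2) d0 sp])
  moreover have "0 \<le> sin (a*(\<bar>d\<bar>/2))"
  proof -
    have "a*(\<bar>d\<bar>/2) \<le> \<bar>d\<bar>/2" using assms d0 by (simp add: mult_left_le_one_le)
    then have "a*(\<bar>d\<bar>/2) \<le> pi" using d0 pi_gt_zero by linarith
    moreover have "0 \<le> a*(\<bar>d\<bar>/2)" using assms by simp
    ultimately show ?thesis by (simp add: sin_ge_zero)
  qed
  ultimately have "sin (a*(\<bar>d\<bar>/2))^2 \<le> (sin (a*(pi/2)) * sin (\<bar>d\<bar>/2))^2"
    by (metis mult.right_neutral power_mono sin_pi_half)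
  also have "\<dots> = sin (a*(pi/2))^2 * sin (\<bar>d\<bar>/2)^2" by (simp add: power_mult_distrib)
  also have "\<dots> \<le> C' * sin (\<bar>d\<bar>/2)^2" using C'ge by (intro mult_right_mono) auto
  finally show "B' \<le> B * C'" unfolding B B' by (simp add: mult.commute)
qed

lemma lc_half: "lc r p g = (p - r)^2 + 4*r*p* sin(g/2)^2"
proof -
  have c: "cos g = 1 - 2 * sin (g/2)^2" using cos_double_sin[of "g/2"] by simp
  show ?thesis unfolding lc_def c by (simp add: power2_diff algebra_simps)
qed

lemma lc_X:
  assumes "0 < r" "0 < p"
  shows "lc r p g = 4*r*p*((p - r)^2 / (4*(r*p)) + sin(g/2)^2)"
  using assms unfolding lc_half by (simp add: field_simps)

lemma lower_E:
  fixes a r p \<alpha> \<beta> :: real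
  assumes a: "1/2 < a" "a < 1" and rp: "0 < r" "0 < p"
    and al: "0 < \<alpha>" "\<alpha> < pi/a" and be: "0 < \<beta>" "\<beta> < pi/a"
  shows "a^2 * (lc r p (\<alpha>-\<beta>) * lc (r powr a) (p powr a) (a*(\<alpha>+\<beta>)))
         \<le> max (lc r p (\<alpha>-\<beta>)) (lc r p (gam \<alpha> \<beta>)) * lc (r powr a) (p powr a) (a*(\<alpha>-\<beta>))"
proof -
  define X where "X = (p - r)^2 / (4 * (r * p))"
  define X' where "X' = (p powr a - r powr a)^2 / (4 * (r powr a * p powr a))"
  define B where "B = sin ((\<alpha>-\<beta>)/2)^2"
  define B' where "B' = sin (a*(\<alpha>-\<beta>)/2)^2"
  define C where "C = sin (gam \<alpha> \<beta>/2)^2"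
  define C' where "C' = sin (a*(\<alpha>+\<beta>)/2)^2"
  have hf: "X' \<le> a^2 * X" "a^2 * X \<le> X' * (1 + (1 - a^2) * X)" "0 \<le> X" "0 \<le> X'"
    using hyp_facts[OF rp, of a] a unfolding X_def X'_def by auto
  define R where "R = r powr a"
  define P where "P = p powr a"
  have RP: "0 < R" "0 < P" using rp by (auto simp: R_def P_def)
  have E1: "lc r p (\<alpha>-\<beta>) = 4*r*p*(X + B)" unfolding X_def B_def using lc_X[OF rp] by simp
  have Eg: "lc r p (gam \<alpha> \<beta>) = 4*r*p*(X + C)" unfolding X_def C_def using lc_X[OF rp] by simp
  have E2: "lc R P (a*(\<alpha>-\<beta>)) = 4*R*P*(X' + B')" unfolding X'_def B'_def R_def P_def
    using lc_X[OF RP[unfolded R_def P_def]] by simp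
  have E3: "lc R P (a*(\<alpha>+\<beta>)) = 4*R*P*(X' + C')" unfolding X'_def C'_def R_def P_def
    using lc_X[OF RP[unfolded R_def P_def]] by simp
  have a2: "0 \<le> a^2" "a^2 \<le> 1" using a by (auto simp: power_le_one)
  have B0: "0 \<le> B" "0 \<le> B'" "0 \<le> C'" "C \<le> 1" unfolding B_def B'_def C'_def C_def by (auto simp: sinsq_le1)
  have th2: "pi/a < 2*pi" using a by (simp add: field_simps)
  have Bp: "a^2 * B \<le> B'" unfolding B_def B'_def
    by (rule Bp_ge) (use a al be th2 in auto)
  have E1n: "0 \<le> lc r p (\<alpha>-\<beta>)" unfolding E1 using rp hf B0 by simp
  show ?thesis
  proof (cases "pi \<le> \<bar>\<alpha> - \<beta>\<bar>")
    case True
    have c: "a^2 * C' \<le> B'" unfolding C'_def B'_def by (rule lower_trig_cross[OF a al be True])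
    have "a^2 * X' \<le> X'" using a2 hf by (simp add: mult_left_le_one_le)
    then have "a^2 * (X' + C') \<le> X' + B'" using c by (simp add: distrib_left)
    then have "(4*R*P) * (a^2 * (X' + C')) \<le> (4*R*P) * (X' + B')" using RP by (intro mult_left_mono) auto
    then have "a^2 * lc R P (a*(\<alpha>+\<beta>)) \<le> lc R P (a*(\<alpha>-\<beta>))" unfolding E2 E3
      by (simp add: algebra_simps)
    then have "lc r p (\<alpha>-\<beta>) * (a^2 * lc R P (a*(\<alpha>+\<beta>))) \<le> lc r p (\<alpha>-\<beta>) * lc R P (a*(\<alpha>-\<beta>))"
      using E1n by (intro mult_left_mono) auto
    also have "\<dots> \<le> max (lc r p (\<alpha>-\<beta>)) (lc r p (gam \<alpha> \<beta>)) * lc R P (a*(\<alpha>-\<beta>))"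
      unfolding E2 using RP hf B0 by (intro mult_right_mono) auto
    finally show ?thesis unfolding R_def P_def by (simp add: algebra_simps)
  next
    case False
    have CC: "C' \<le> C" unfolding C'_def C_def by (rule lower_trig[OF a al be]) (use False in auto)
    have "a^2 * ((X + B) * (X' + C')) \<le> (X' + B') * (X + C)"
      by (rule lower_alg) (use a hf B0 CC Bp in auto)
    then have "(4*r*p*(4*R*P)) * (a^2 * ((X + B) * (X' + C'))) \<le> (4*r*p*(4*R*P)) * ((X' + B') * (X + C))"
      using rp RP by (intro mult_left_mono) auto
    then have "a^2 * (lc r p (\<alpha>-\<beta>) * lc R P (a*(\<alpha>+\<beta>))) \<le> lc r p (gam \<alpha> \<beta>) * lc R P (a*(\<alpha>-\<beta>))"
      unfolding E1 E2 E3 Eg by (simp add: algebra_simps)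
    also have "\<dots> \<le> max (lc r p (\<alpha>-\<beta>)) (lc r p (gam \<alpha> \<beta>)) * lc R P (a*(\<alpha>-\<beta>))"
      unfolding E2 using RP hf B0 by (intro mult_right_mono) auto
    finally show ?thesis unfolding R_def P_def .
  qed
qed

lemma upper_E_refl:
  fixes a r p \<alpha> \<beta> sg :: real
  assumes a: "0 < a" "a < 1" and rp: "0 < r" "0 < p"
    and d: "\<bar>\<alpha> - \<beta>\<bar> \<le> sg" "sg \<le> pi" and e: "sin (a*(\<alpha>+\<beta>)/2)^2 = sin (a * sg/2)^2"
  shows "lc (r powr a) (p powr a) (a*(\<alpha>-\<beta>)) * lc r p sg \<le> lc r p (\<alpha>-\<beta>) * lc (r powr a) (p powr a) (a*(\<alpha>+\<beta>))"
proof -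
  define X where "X = (p - r)^2 / (4 * (r * p))"
  define X' where "X' = (p powr a - r powr a)^2 / (4 * (r powr a * p powr a))"
  define B where "B = sin ((\<alpha>-\<beta>)/2)^2"
  define B' where "B' = sin (a*(\<alpha>-\<beta>)/2)^2"
  define C where "C = sin (sg/2)^2"
  define C' where "C' = sin (a * sg/2)^2"
  have hf: "X' \<le> a^2 * X" "0 \<le> X"
    using hyp_facts[OF rp, of a] a unfolding X_def X'_def by auto
  define R where "R = r powr a"
  define P where "P = p powr a"
  have RP: "0 < R" "0 < P" using rp by (auto simp: R_def P_def)
  have E1: "lc r p (\<alpha>-\<beta>) = 4*r*p*(X + B)" unfolding X_def B_def using lc_X[OF rp] by simp
  have Eg: "lc r p sg = 4*r*p*(X + C)" unfolding X_def C_def using lc_X[OF rp] by simp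
  have E2: "lc R P (a*(\<alpha>-\<beta>)) = 4*R*P*(X' + B')" unfolding X'_def B'_def R_def P_def
    using lc_X[OF RP[unfolded R_def P_def]] by simp
  have E3: "lc R P (a*(\<alpha>+\<beta>)) = 4*R*P*(X' + C')" unfolding X'_def C'_def R_def P_def
    using lc_X[OF RP[unfolded R_def P_def]] e by simp
  have ut: "B \<le> C" "0 \<le> C' - B' + a^2 * (B - C)" "B' * C \<le> B * C'"
    unfolding B_def B'_def C_def C'_def using upper_trig_refl[of a "\<alpha>-\<beta>" sg] a d by auto
  have "(X' + B') * (X + C) \<le> (X + B) * (X' + C')"
    by (rule upper_alg[OF hf(2) hf(1) ut])
  then have "(4*r*p*(4*R*P)) * ((X' + B') * (X + C)) \<le> (4*r*p*(4*R*P)) * ((X + B) * (X' + C'))"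
    using rp RP by (intro mult_left_mono) auto
  then show ?thesis unfolding R_def[symmetric] P_def[symmetric] E1 E2 E3 Eg by (simp add: algebra_simps)
qed

lemma upper_E_vertex:
  fixes a r p \<alpha> \<beta> :: real
  assumes a: "0 < a" "a < 1" and rp: "0 < r" "0 < p"
    and d: "\<bar>\<alpha> - \<beta>\<bar> \<le> pi" and w: "a*(pi/2) \<le> a*(\<alpha>+\<beta>)/2" "a*(\<alpha>+\<beta>)/2 \<le> pi - a*(pi/2)"
  shows "lc (r powr a) (p powr a) (a*(\<alpha>-\<beta>)) * lc r p pi \<le> lc r p (\<alpha>-\<beta>) * lc (r powr a) (p powr a) (a*(\<alpha>+\<beta>))"
proof -
  define X where "X = (p - r)^2 / (4 * (r * p))"
  define X' where "X' = (p powr a - r powr a)^2 / (4 * (r powr a * p powr a))"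
  define B where "B = sin ((\<alpha>-\<beta>)/2)^2"
  define B' where "B' = sin (a*(\<alpha>-\<beta>)/2)^2"
  define C' where "C' = sin (a*(\<alpha>+\<beta>)/2)^2"
  have hf: "X' \<le> a^2 * X" "0 \<le> X"
    using hyp_facts[OF rp, of a] a unfolding X_def X'_def by auto
  define R where "R = r powr a"
  define P where "P = p powr a"
  have RP: "0 < R" "0 < P" using rp by (auto simp: R_def P_def)
  have E1: "lc r p (\<alpha>-\<beta>) = 4*r*p*(X + B)" unfolding X_def B_def using lc_X[OF rp] by simp
  have Eg: "lc r p pi = 4*r*p*(X + 1)" unfolding X_def using lc_X[OF rp, of pi] by simp
  have E2: "lc R P (a*(\<alpha>-\<beta>)) = 4*R*P*(X' + B')" unfolding X'_def B'_def R_def P_def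
    using lc_X[OF RP[unfolded R_def P_def]] by simp
  have E3: "lc R P (a*(\<alpha>+\<beta>)) = 4*R*P*(X' + C')" unfolding X'_def C'_def R_def P_def
    using lc_X[OF RP[unfolded R_def P_def]] by simp
  have ut: "B \<le> 1" "0 \<le> C' - B' + a^2 * (B - 1)" "B' * 1 \<le> B * C'"
    unfolding B_def B'_def C'_def using upper_trig_vertex[of a "\<alpha>-\<beta>" "a*(\<alpha>+\<beta>)/2"] a d w by auto
  have "(X' + B') * (X + 1) \<le> (X + B) * (X' + C')"
    by (rule upper_alg[OF hf(2) hf(1) ut])
  then have "(4*r*p*(4*R*P)) * ((X' + B') * (X + 1)) \<le> (4*r*p*(4*R*P)) * ((X + B) * (X' + C'))"
    using rp RP by (intro mult_left_mono) auto
  then show ?thesis unfolding R_def[symmetric] P_def[symmetric] E1 E2 E3 Eg by (simp add: algebra_simps)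
qed
lemma arg2pi_eq: "arg2pi z = Arg2pi z"
proof (cases "z = 0")
  case True
  then show ?thesis by (simp add: arg2pi_def Arg_zero)
next
  case False
  have z: "z = of_real (norm z) * exp (\<i> * of_real (Arg z))" using Arg_eq[OF False] by simp
  have ex: "exp (\<i> * of_real (arg2pi z)) = exp (\<i> * of_real (Arg z))"
  proof (cases "0 \<le> Arg z")
    case True then show ?thesis by (simp add: arg2pi_def)
  next
    case False
    have "cis (Arg z + 2*pi) = cis (Arg z)" by (simp add: complex_eq_iff)
    then have "exp (\<i> * of_real (Arg z + 2*pi)) = exp (\<i> * of_real (Arg z))"
      by (simp only: cis_conv_exp)
    then show ?thesis using False by (simp add: arg2pi_def)
  qed
  have r: "0 \<le> arg2pi z" "arg2pi z < 2*pi"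
    using mpi_less_Arg[of z] Arg_le_pi[of z] pi_gt_zero by (auto simp: arg2pi_def)
  show ?thesis
    by (rule Arg2pi_unique[symmetric, of "norm z"]) (use False r ex z in auto)
qed

lemma polar_rcis: "z = rcis (cmod z) (arg2pi z)"
proof -
  have "is_Arg z (Arg2pi z)" using Arg2pi by blast
  then show ?thesis unfolding arg2pi_eq is_Arg_def rcis_def cis_conv_exp by simp
qed

lemma arg2pi_range: "0 \<le> arg2pi z" "arg2pi z < 2*pi"
  unfolding arg2pi_eq using Arg2pi by auto

lemma arg2pi_rcis:
  assumes "0 < r" "0 \<le> \<phi>" "\<phi> < 2*pi"
  shows "arg2pi (rcis r \<phi>) = \<phi>"
  unfolding arg2pi_eq
  by (rule Arg2pi_unique[of r]) (use assms in \<open>auto simp: rcis_def cis_conv_exp\<close>)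

lemma cpow_rcis: "cpow z a = rcis (cmod z powr a) (a * arg2pi z)"
  by (simp add: cpow_def rcis_def)

lemma cmod_rcis_sq: "cmod (rcis r A - rcis p B)^2 = lc r p (A - B)"
proof -
  have "cmod (rcis r A - rcis p B)^2 = (r * cos A - p * cos B)^2 + (r * sin A - p * sin B)^2"
    by (simp add: cmod_power2)
  also have "\<dots> = r^2 * (sin A ^2 + cos A ^2) + p^2 * (sin B^2 + cos B^2) - 2*r*p*(cos A * cos B + sin A * sin B)"
    unfolding power2_eq_square by algebra
  also have "\<dots> = r^2 + p^2 - 2*r*p*(cos A * cos B + sin A * sin B)" by simp
  also have "\<dots> = lc r p (A - B)" by (simp add: lc_def cos_diff)
  finally show ?thesis .
qed

lemma cmod_rcis: "cmod (rcis r A - rcis p B) = sqrt (lc r p (A - B))"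
  using cmod_rcis_sq[of r A p B] by (metis norm_ge_zero real_sqrt_unique)

lemma lc_minus: "lc r p (-g) = lc r p g"
  by (simp add: lc_def)

lemma lc_nonneg: "0 \<le> lc r p g"
  using cmod_rcis_sq[of r g p 0] by (metis diff_zero zero_le_power2)

lemma lc_pi: "0 \<le> r \<Longrightarrow> 0 \<le> p \<Longrightarrow> sqrt (lc r p pi) = r + p"
  by (simp add: lc_def power2_eq_square algebra_simps real_sqrt_unique[of "r+p"])

lemma sin_theta_neg:
  assumes "pi < \<theta>" "\<theta> < 2*pi"
  shows "sin \<theta> < 0"
proof -
  have "0 < sin (\<theta> - pi)" using assms by (intro sin_gt_zero) auto
  then show ?thesis by simp
qed

lemma sector_iff:
  assumes th: "pi < \<theta>" "\<theta> < 2*pi"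
  shows "z \<in> sector \<theta> \<longleftrightarrow> (0 < Im z \<or> Im (z * cis (-\<theta>)) < 0)"
proof -
  define r where "r = cmod z"
  define \<phi> where "\<phi> = arg2pi z"
  have z: "z = rcis r \<phi>" unfolding r_def \<phi>_def by (rule polar_rcis)
  have ph: "0 \<le> \<phi>" "\<phi> < 2*pi" unfolding \<phi>_def by (rule arg2pi_range)+
  have Imz: "Im z = r * sin \<phi>" by (subst z) simp
  have Imc: "Im (z * cis (-\<theta>)) = r * sin (\<phi> - \<theta>)"
    by (subst z) (simp add: rcis_def mult.assoc cis_mult)
  have r0: "0 \<le> r" by (simp add: r_def)
  have sth: "sin \<theta> < 0" by (rule sin_theta_neg[OF th])
  show ?thesis
  proof
    assume "z \<in> sector \<theta>"
    then have zs: "z \<noteq> 0" "0 < \<phi>" "\<phi> < \<theta>" by (auto simp: sector_def \<phi>_def)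
    then have rp: "0 < r" by (simp add: r_def)
    show "0 < Im z \<or> Im (z * cis (-\<theta>)) < 0"
    proof (cases "\<phi> < pi")
      case True
      then have "0 < sin \<phi>" using zs by (intro sin_gt_zero) auto
      then show ?thesis using rp Imz by simp
    next
      case False
      then have "0 < sin (\<theta> - \<phi>)" using zs th by (intro sin_gt_zero) auto
      then have "sin (\<phi> - \<theta>) < 0" by (metis minus_diff_eq neg_less_0_iff_less sin_minus)
      then show ?thesis using rp Imc by (simp add: mult_pos_neg)
    qed
  next
    assume h: "0 < Im z \<or> Im (z * cis (-\<theta>)) < 0"
    then have zn: "z \<noteq> 0" by auto
    then have rp: "0 < r" by (simp add: r_def)
    show "z \<in> sector \<theta>"
    proof (cases "0 < Im z")
      case True
      then have "0 < \<phi> \<and> \<phi> < pi" unfolding \<phi>_def arg2pi_eq by (simp add: Arg2pi_lt_pi)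
      then show ?thesis using zn th by (auto simp: sector_def \<phi>_def)
    next
      case False
      have "Im (z * cis (-\<theta>)) < 0" using h False by blast
      then have "r * sin (\<phi> - \<theta>) < 0" unfolding Imc .
      then have s: "sin (\<phi> - \<theta>) < 0" using rp by (simp add: mult_less_0_iff)
      have "\<phi> \<noteq> 0" using s sth by auto
      moreover have "\<not> \<theta> \<le> \<phi>"
      proof
        assume "\<theta> \<le> \<phi>"
        then have "0 \<le> sin (\<phi> - \<theta>)" using ph th by (intro sin_ge_zero) auto
        then show False using s by simp
      qed
      ultimately show ?thesis using zn ph by (auto simp: sector_def \<phi>_def)
    qed
  qed
qed

lemma sector_eq:
  assumes th: "pi < \<theta>" "\<theta> < 2*pi"
  shows "sector \<theta> = {z. 0 < Im z} \<union> (\<lambda>z. z * cis (-\<theta>)) -` {w. Im w < 0}"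
  using sector_iff[OF th] by auto

lemma sector_open:
  assumes th: "pi < \<theta>" "\<theta> < 2*pi"
  shows "open (sector \<theta>)"
  unfolding sector_eq[OF th]
  by (intro open_Un open_halfspace_Im_gt open_vimage open_halfspace_Im_lt continuous_intros)

lemma frontier_sector_sub:
  assumes th: "pi < \<theta>" "\<theta> < 2*pi" and z: "z \<in> frontier (sector \<theta>)"
  shows "\<exists>t\<ge>0. z = rcis t 0 \<or> z = rcis t \<theta>"
proof -
  define c where "c = cis (-\<theta>)"
  have zS: "z \<notin> sector \<theta>" using z sector_open[OF th] by (simp add: frontier_def interior_open)
  have "closure (sector \<theta>) \<subseteq> {z. 0 \<le> Im z} \<union> (\<lambda>z. z * c) -` {w. Im w \<le> 0}"
  proof (rule closure_minimal)
    show "sector \<theta> \<subseteq> {z. 0 \<le> Im z} \<union> (\<lambda>z. z * c) -` {w. Im w \<le> 0}"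
      using sector_iff[OF th] by (auto simp: c_def)
    show "closed ({z. 0 \<le> Im z} \<union> (\<lambda>z. z * c) -` {w. Im w \<le> 0})"
      by (intro closed_Un closed_halfspace_Im_ge closed_vimage closed_halfspace_Im_le continuous_intros)
  qed
  moreover have "z \<in> closure (sector \<theta>)" using z by (simp add: frontier_def)
  ultimately have cl: "0 \<le> Im z \<or> Im (z * c) \<le> 0" by auto
  have ns: "\<not> 0 < Im z" "\<not> Im (z * c) < 0" using zS sector_iff[OF th, of z] by (auto simp: c_def)
  have sth: "sin \<theta> < 0" by (rule sin_theta_neg[OF th])
  have Imc: "Im (w * c) = Im w * cos \<theta> - Re w * sin \<theta>" for w by (simp add: c_def)
  show ?thesis
  proof (cases "Im z = 0")
    case True
    then have "0 \<le> - Re z * sin \<theta>" using ns Imc[of z] by simp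
    then have "0 \<le> Re z" using sth by (simp add: mult_le_0_iff)
    moreover have "z = rcis (Re z) 0" using True by (simp add: complex_eq_iff)
    ultimately show ?thesis by blast
  next
    case False
    then have i0: "Im (z * c) = 0" using cl ns by auto
    define t where "t = Re (z * c)"
    have zc: "z * c = rcis t 0" using i0 by (simp add: complex_eq_iff t_def)
    have "z = z * c * cis \<theta>" by (simp add: c_def mult.assoc cis_mult)
    then have zz: "z = rcis t \<theta>" unfolding zc by (simp add: rcis_def)
    have "Im z \<le> 0" using ns by simp
    then have "t * sin \<theta> \<le> 0" using zz by (metis Im_rcis)
    then have "0 \<le> t" using sth by (simp add: mult_le_0_iff)
    then show ?thesis using zz by blast
  qed
qed

lemma frontier_sector_rays:
  assumes th: "pi < \<theta>" "\<theta> < 2*pi" and t: "0 \<le> t"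
  shows "rcis t 0 \<in> frontier (sector \<theta>)" "rcis t \<theta> \<in> frontier (sector \<theta>)"
proof -
  have sth: "sin \<theta> < 0" by (rule sin_theta_neg[OF th])
  have int: "interior (sector \<theta>) = sector \<theta>" using sector_open[OF th] by (simp add: interior_open)
  have "t * sin \<theta> \<le> 0" using sth t by (simp add: mult_nonneg_nonpos)
  then have n1: "rcis t 0 \<notin> sector \<theta>"
    using sector_iff[OF th, of "rcis t 0"] by (simp add: rcis_def)
  have c1: "rcis t 0 \<in> closure (sector \<theta>)"
    unfolding closure_approachable
  proof (intro allI impI)
    fix e :: real assume e: "0 < e"
    have "complex_of_real t + \<i> * of_real (e/2) \<in> sector \<theta>" using sector_iff[OF th] e by simp
    moreover have "dist (complex_of_real t + \<i> * of_real (e/2)) (rcis t 0) < e"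
      using e by (simp add: dist_norm norm_mult)
    ultimately show "\<exists>y\<in>sector \<theta>. dist y (rcis t 0) < e" by blast
  qed
  show "rcis t 0 \<in> frontier (sector \<theta>)" using n1 c1 int by (simp add: frontier_def)
  have e1: "rcis t \<theta> * cis (-\<theta>) = of_real t" by (simp add: rcis_def mult.assoc cis_mult)
  have "t * sin \<theta> \<le> 0" using sth t by (simp add: mult_nonneg_nonpos)
  then have n2: "rcis t \<theta> \<notin> sector \<theta>"
    using sector_iff[OF th, of "rcis t \<theta>"] e1 by simp
  have c2: "rcis t \<theta> \<in> closure (sector \<theta>)"
    unfolding closure_approachable
  proof (intro allI impI)
    fix e :: real assume e: "0 < e"
    define y where "y = (complex_of_real t - \<i> * of_real (e/2)) * cis \<theta>"
    have "y * cis (-\<theta>) = complex_of_real t - \<i> * of_real (e/2)"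
      by (simp add: y_def mult.assoc cis_mult)
    then have "y \<in> sector \<theta>" using sector_iff[OF th, of y] e by simp
    moreover have "y - rcis t \<theta> = (- \<i> * of_real (e/2)) * cis \<theta>"
      by (simp add: y_def rcis_def algebra_simps)
    then have "dist y (rcis t \<theta>) < e" using e by (simp add: dist_norm norm_mult)
    ultimately show "\<exists>y\<in>sector \<theta>. dist y (rcis t \<theta>) < e" by blast
  qed
  show "rcis t \<theta> \<in> frontier (sector \<theta>)" using n2 c2 int by (simp add: frontier_def)
qed
lemma lc_cos_eq: "cos g = cos h \<Longrightarrow> lc r p g = lc r p h"
  by (simp add: lc_def)

lemma ray_lb:
  fixes t r p A B \<alpha> \<beta> \<phi> :: real
  assumes "0 \<le> t" "0 \<le> r" "0 \<le> p" "0 \<le> A" "A \<le> pi" "0 \<le> B" "B \<le> pi"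
    and cA: "cos (\<alpha> - \<phi>) = cos A" and cB: "cos (\<beta> - \<phi>) = cos B"
  shows "sqrt (lc r p (min pi (A+B))) \<le> cmod (rcis r \<alpha> - rcis t \<phi>) + cmod (rcis t \<phi> - rcis p \<beta>)"
proof -
  define B' where "B' = min B (pi - A)"
  have B'r: "0 \<le> B'" "B' \<le> B" "A + B' = min pi (A+B)" using assms by (auto simp: B'_def)
  have h1: "cmod (rcis r \<alpha> - rcis t \<phi>) = cmod (rcis r A - rcis t 0)"
    unfolding cmod_rcis using cA by (simp add: lc_def)
  have "cos B \<le> cos B'" using B'r assms by (intro cos_monotone_0_pi_le) auto
  then have "t * p * cos B \<le> t * p * cos B'" using assms by (intro mult_left_mono) auto
  then have "lc t p (0 - (- B')) \<le> lc t p (\<phi> - \<beta>)"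
    using cB by (simp add: lc_def algebra_simps cos_diff[symmetric] cos_minus[of "\<phi> - \<beta>", symmetric])
  then have h2: "cmod (rcis t 0 - rcis p (-B')) \<le> cmod (rcis t \<phi> - rcis p \<beta>)"
    unfolding cmod_rcis by (rule real_sqrt_le_mono)
  have "cmod (rcis r A - rcis p (-B')) \<le> cmod (rcis r A - rcis t 0) + cmod (rcis t 0 - rcis p (-B'))"
    using norm_triangle_ineq[of "rcis r A - rcis t 0" "rcis t 0 - rcis p (-B')"] by simp
  moreover have "cmod (rcis r A - rcis p (-B')) = sqrt (lc r p (min pi (A+B)))"
    unfolding cmod_rcis using B'r by simp
  ultimately show ?thesis using h1 h2 by linarith
qed

lemma m0_facts:
  fixes \<phi> :: real
  assumes "0 \<le> \<phi>" "\<phi> \<le> 2*pi"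
  shows "cos \<phi> = cos (m0 \<phi>)" "0 \<le> m0 \<phi>" "m0 \<phi> \<le> pi"
proof -
  show "cos \<phi> = cos (m0 \<phi>)"
  proof (cases "\<phi> \<le> pi")
    case False
    have "cos (2*pi - \<phi>) = cos \<phi>" by (simp add: cos_diff)
    then show ?thesis using False by (simp add: m0_def)
  qed (simp add: m0_def)
  show "0 \<le> m0 \<phi>" "m0 \<phi> \<le> pi" using assms by (auto simp: m0_def)
qed

lemma seg_point:
  fixes p q :: complex
  assumes "0 < Im p" "Im q < 0" "0 \<le> Re p * (- Im q) + Re q * Im p"
  shows "\<exists>t\<ge>0. cmod (p - of_real t) + cmod (of_real t - q) = cmod (p - q)"
proof -
  define l where "l = Im p / (Im p - Im q)"
  have l: "0 < l" "l < 1" using assms by (auto simp: l_def field_simps)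
  define w where "w = p + of_real l * (q - p)"
  have imw: "Im w = 0" using assms by (simp add: w_def l_def field_simps)
  have rew: "Re w = (Re p * (- Im q) + Re q * Im p) / (Im p - Im q)"
    using assms by (simp add: w_def l_def field_simps)
  then have rw0: "0 \<le> Re w" using assms by simp
  have wr: "w = of_real (Re w)" using imw by (simp add: complex_eq_iff)
  have "p - w = of_real l * (p - q)" by (simp add: w_def algebra_simps)
  then have n1: "cmod (p - w) = l * cmod (p - q)" using l by (simp add: norm_mult)
  have "w - q = of_real (1 - l) * (p - q)" by (simp add: w_def algebra_simps)
  moreover have "cmod (1 - complex_of_real l) = 1 - l"
    using l by (metis abs_of_pos diff_gt_0_iff_gt norm_of_real of_real_1 of_real_diff)
  ultimately have n2: "cmod (w - q) = (1 - l) * cmod (p - q)" by (simp add: norm_mult)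
  have "cmod (p - w) + cmod (w - q) = cmod (p - q)" unfolding n1 n2 by (simp add: algebra_simps)
  then show ?thesis using rw0 wr by metis
qed

lemma refl_point:
  fixes r p A B :: real
  assumes "0 < r" "0 < p" "0 < A" "0 < B" "A + B \<le> pi"
  shows "\<exists>t\<ge>0. cmod (rcis r A - rcis t 0) + cmod (rcis t 0 - rcis p B) = sqrt (lc r p (A+B))"
proof -
  have sA: "0 < sin A" "0 < sin B" using assms by (auto intro!: sin_gt_zero)
  have sAB: "0 \<le> sin (A+B)" using assms by (intro sin_ge_zero) auto
  have h: "0 \<le> (r * p) * sin (A + B)" using sAB assms by simp
  have "0 \<le> Re (rcis r A) * (- Im (rcis p (-B))) + Re (rcis p (-B)) * Im (rcis r A)"
    using h by (simp add: sin_add algebra_simps)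
  then obtain t where t: "0 \<le> t" "cmod (rcis r A - of_real t) + cmod (of_real t - rcis p (-B)) = cmod (rcis r A - rcis p (-B))"
    using seg_point[of "rcis r A" "rcis p (-B)"] assms sA by auto
  have "cmod (of_real t - rcis p (-B)) = cmod (rcis t 0 - rcis p B)"
    unfolding rcis_zero_arg[symmetric] cmod_rcis by (simp add: lc_minus)
  then show ?thesis using t unfolding cmod_rcis[of r A p "-B"] by (auto simp: rcis_zero_arg)
qed

lemma cross_point:
  fixes r p \<alpha> \<beta> :: real
  assumes "0 < r" "0 < p" "0 < \<alpha>" "\<alpha> + pi \<le> \<beta>" "\<beta> < 2*pi"
  shows "\<exists>t\<ge>0. cmod (rcis r \<alpha> - rcis t 0) + cmod (rcis t 0 - rcis p \<beta>) = cmod (rcis r \<alpha> - rcis p \<beta>)"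
proof -
  have s1: "0 < sin \<alpha>" using assms by (intro sin_gt_zero) auto
  have "0 < sin (\<beta> - pi)" using assms by (intro sin_gt_zero) auto
  then have s2: "sin \<beta> < 0" by simp
  have "0 \<le> sin (\<alpha> - \<beta> + 2*pi)" using assms by (intro sin_ge_zero) auto
  then have s3: "0 \<le> sin (\<alpha> - \<beta>)" by (metis sin_periodic)
  have h: "0 \<le> (r * p) * sin (\<alpha> - \<beta>)" using s3 assms by simp
  have "0 \<le> Re (rcis r \<alpha>) * (- Im (rcis p \<beta>)) + Re (rcis p \<beta>) * Im (rcis r \<alpha>)"
    using h by (simp add: sin_diff algebra_simps)
  then obtain t where "0 \<le> t" "cmod (rcis r \<alpha> - of_real t) + cmod (of_real t - rcis p \<beta>) = cmod (rcis r \<alpha> - rcis p \<beta>)"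
    using seg_point[of "rcis r \<alpha>" "rcis p \<beta>"] assms s1 s2 by (auto simp: mult_pos_neg)
  then show ?thesis by (auto simp: rcis_zero_arg)
qed

lemma E2_le_E3:
  fixes R P x y :: real
  assumes "0 < R" "0 < P" "0 < x" "x < pi" "0 < y" "y < pi"
  shows "lc R P (x - y) < lc R P (x + y)"
proof -
  have "0 < sin x" "0 < sin y" using assms by (auto intro!: sin_gt_zero)
  then have "0 < sin x * sin y" by simp
  then have "0 < R * P * (sin x * sin y)" using assms by simp
  then show ?thesis by (simp add: lc_def cos_diff cos_add algebra_simps)
qed
lemma tanh_artanh_real:
  fixes q :: real
  assumes "-1 < q" "q < 1"
  shows "tanh (artanh q) = q"
proof -
  have pos: "0 < (1 + q) / (1 - q)" using assms by simp
  have "exp (- 2 * artanh q) = exp (- ln ((1 + q) / (1 - q)))" by (simp add: artanh_def)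
  also have "\<dots> = (1 - q) / (1 + q)" using pos assms by (simp add: exp_minus exp_ln)
  finally have e: "exp (- 2 * artanh q) = (1 - q) / (1 + q)" .
  show ?thesis unfolding tanh_real_altdef e using assms by (simp add: field_simps)
qed

lemma cnj_rcis: "cnj (rcis r t) = rcis r (-t)"
  by (simp add: rcis_def cis_cnj)

lemma sector_polar:
  assumes "x \<in> sector \<theta>"
  shows "0 < cmod x" "0 < arg2pi x" "arg2pi x < \<theta>" "x = rcis (cmod x) (arg2pi x)"
  using assms polar_rcis[of x] by (auto simp: sector_def)

lemma a_facts:
  assumes "pi < \<theta>" "\<theta> < 2*pi"
  shows "1/2 < pi/\<theta>" "pi/\<theta> < 1" "pi/(pi/\<theta>) = \<theta>" "0 < pi/\<theta>"
  using assms pi_gt_zero by (auto simp: field_simps)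

lemma lc_2pi: "lc r p (2*pi - g) = lc r p g"
  by (simp add: lc_def cos_diff)

lemma sq_le_from_sqrt: "sqrt x \<le> y \<Longrightarrow> 0 \<le> x \<Longrightarrow> x \<le> y^2"
  by (metis real_sqrt_le_iff real_sqrt_power_even zero_le_numeral zero_less_numeral power2_eq_square real_sqrt_ge_zero order_trans power_mono real_sqrt_pow2)

lemma cpow_sector:
  assumes "x \<in> sector \<theta>"
  shows "cpow x a = rcis (cmod x powr a) (a * arg2pi x)"
  by (rule cpow_rcis)

lemma F_lower:
  fixes \<theta> :: real and x y z :: complex
  assumes th: "pi < \<theta>" "\<theta> < 2*pi" and x: "x \<in> sector \<theta>" and y: "y \<in> sector \<theta>"
    and z: "z \<in> frontier (sector \<theta>)"
  shows "(pi/\<theta>)^2 * (cmod (x - y)^2 * cmod (cpow x (pi/\<theta>) - cnj (cpow y (pi/\<theta>)))^2)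
         \<le> (cmod (x - z) + cmod (z - y))^2 * cmod (cpow x (pi/\<theta>) - cpow y (pi/\<theta>))^2"
proof -
  define a where "a = pi/\<theta>"
  have af: "1/2 < a" "a < 1" "pi/a = \<theta>" "0 < a" using a_facts[OF th] by (auto simp: a_def)
  define r where "r = cmod x"
  define \<alpha> where "\<alpha> = arg2pi x"
  define p where "p = cmod y"
  define \<beta> where "\<beta> = arg2pi y"
  have xp: "0 < r" "0 < \<alpha>" "\<alpha> < \<theta>" "x = rcis r \<alpha>" using sector_polar[OF x] by (auto simp: r_def \<alpha>_def)
  have yp: "0 < p" "0 < \<beta>" "\<beta> < \<theta>" "y = rcis p \<beta>" using sector_polar[OF y] by (auto simp: p_def \<beta>_def)
  define R where "R = r powr a"
  define P where "P = p powr a"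
  have u: "cpow x a = rcis R (a*\<alpha>)" by (simp add: cpow_rcis R_def r_def \<alpha>_def)
  have v: "cpow y a = rcis P (a*\<beta>)" by (simp add: cpow_rcis P_def p_def \<beta>_def)
  have E1: "cmod (x - y)^2 = lc r p (\<alpha> - \<beta>)" using xp yp cmod_rcis_sq by metis
  have E2: "cmod (cpow x a - cpow y a)^2 = lc R P (a*(\<alpha> - \<beta>))"
    unfolding u v cmod_rcis_sq by (simp add: algebra_simps)
  have E3: "cmod (cpow x a - cnj (cpow y a))^2 = lc R P (a*(\<alpha> + \<beta>))"
    unfolding u v cnj_rcis cmod_rcis_sq by (simp add: algebra_simps)
  define F where "F = cmod (x - z) + cmod (z - y)"
  have F0: "0 \<le> F" by (simp add: F_def)
  have Fxy: "cmod (x - y) \<le> F" unfolding F_def using norm_triangle_ineq[of "x - z" "z - y"] by simp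
  have E1F: "lc r p (\<alpha> - \<beta>) \<le> F^2" unfolding E1[symmetric] using Fxy by (intro power_mono) auto
  obtain t where t: "0 \<le> t" "z = rcis t 0 \<or> z = rcis t \<theta>" using frontier_sector_sub[OF th z] by blast
  have abnd: "\<alpha> \<le> 2*pi" "\<beta> \<le> 2*pi" "\<theta> - \<alpha> \<le> 2*pi" "\<theta> - \<beta> \<le> 2*pi" using xp yp th by auto
  have key: "a^2 * (lc r p (\<alpha> - \<beta>) * lc R P (a*(\<alpha> + \<beta>))) \<le> F^2 * lc R P (a*(\<alpha> - \<beta>))"
  proof (cases "z = rcis t 0")
    case True
    have "sqrt (lc r p (min pi (m0 \<alpha> + m0 \<beta>))) \<le> F"
      unfolding F_def True xp(4) yp(4)
      by (rule ray_lb) (use t xp yp m0_facts[of \<alpha>] m0_facts[of \<beta>] abnd in auto)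
    then have Eg: "lc r p (gam \<alpha> \<beta>) \<le> F^2" unfolding gam_def by (rule sq_le_from_sqrt) (simp add: lc_nonneg)
    have "a^2 * (lc r p (\<alpha> - \<beta>) * lc R P (a*(\<alpha> + \<beta>)))
        \<le> max (lc r p (\<alpha>-\<beta>)) (lc r p (gam \<alpha> \<beta>)) * lc R P (a*(\<alpha>-\<beta>))"
      unfolding R_def P_def by (rule lower_E) (use af xp yp in auto)
    also have "\<dots> \<le> F^2 * lc R P (a*(\<alpha>-\<beta>))"
      using Eg E1F by (intro mult_right_mono) (auto simp: lc_nonneg)
    finally show ?thesis .
  next
    case False
    then have zt: "z = rcis t \<theta>" using t by auto
    have c1: "cos (\<alpha> - \<theta>) = cos (m0 (\<theta> - \<alpha>))" "cos (\<beta> - \<theta>) = cos (m0 (\<theta> - \<beta>))"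
      using m0_facts[of "\<theta> - \<alpha>"] m0_facts[of "\<theta> - \<beta>"] xp yp abnd
      by (auto simp: cos_minus[of "\<theta> - _", symmetric])
    have "sqrt (lc r p (min pi (m0 (\<theta> - \<alpha>) + m0 (\<theta> - \<beta>)))) \<le> F"
      unfolding F_def zt xp(4) yp(4)
      by (rule ray_lb) (use t xp yp m0_facts[of "\<theta> - \<alpha>"] m0_facts[of "\<theta> - \<beta>"] abnd c1 in auto)
    then have Eg: "lc r p (gam (\<theta> - \<alpha>) (\<theta> - \<beta>)) \<le> F^2" unfolding gam_def
      by (rule sq_le_from_sqrt) (simp add: lc_nonneg)
    have "a^2 * (lc r p ((\<theta> - \<alpha>) - (\<theta> - \<beta>)) * lc R P (a*((\<theta> - \<alpha>) + (\<theta> - \<beta>))))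
        \<le> max (lc r p ((\<theta> - \<alpha>) - (\<theta> - \<beta>))) (lc r p (gam (\<theta> - \<alpha>) (\<theta> - \<beta>))) * lc R P (a*((\<theta> - \<alpha>) - (\<theta> - \<beta>)))"
      unfolding R_def P_def by (rule lower_E) (use af xp yp in auto)
    moreover have "lc r p ((\<theta> - \<alpha>) - (\<theta> - \<beta>)) = lc r p (\<alpha> - \<beta>)"
      using lc_minus[of r p "\<alpha> - \<beta>"] by simp
    moreover have "lc R P (a*((\<theta> - \<alpha>) - (\<theta> - \<beta>))) = lc R P (a*(\<alpha> - \<beta>))"
      using lc_minus[of R P "a*(\<alpha> - \<beta>)"] by (simp add: algebra_simps)
    moreover have "lc R P (a*((\<theta> - \<alpha>) + (\<theta> - \<beta>))) = lc R P (a*(\<alpha> + \<beta>))"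
    proof -
      have "a*((\<theta> - \<alpha>) + (\<theta> - \<beta>)) = 2*pi - a*(\<alpha> + \<beta>)"
        using af by (simp add: algebra_simps field_simps)
      then show ?thesis by (simp add: lc_2pi)
    qed
    ultimately have "a^2 * (lc r p (\<alpha> - \<beta>) * lc R P (a*(\<alpha> + \<beta>)))
        \<le> max (lc r p (\<alpha>-\<beta>)) (lc r p (gam (\<theta> - \<alpha>) (\<theta> - \<beta>))) * lc R P (a*(\<alpha>-\<beta>))" by simp
    also have "\<dots> \<le> F^2 * lc R P (a*(\<alpha>-\<beta>))"
      using Eg E1F by (intro mult_right_mono) (auto simp: lc_nonneg)
    finally show ?thesis .
  qed
  show ?thesis using key unfolding a_def[symmetric] E1 E2 E3 F_def[symmetric] by simp
qed
lemma F_upper: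
  fixes \<theta> :: real and x y :: complex
  assumes th: "pi < \<theta>" "\<theta> < 2*pi" and x: "x \<in> sector \<theta>" and y: "y \<in> sector \<theta>"
  shows "\<exists>z\<in>frontier (sector \<theta>). cmod (cpow x (pi/\<theta>) - cpow y (pi/\<theta>))^2 * (cmod (x - z) + cmod (z - y))^2
         \<le> cmod (x - y)^2 * cmod (cpow x (pi/\<theta>) - cnj (cpow y (pi/\<theta>)))^2"
proof -
  define a where "a = pi/\<theta>"
  have af: "1/2 < a" "a < 1" "pi/a = \<theta>" "0 < a" using a_facts[OF th] by (auto simp: a_def)
  have ath: "a * \<theta> = pi" using th by (simp add: a_def)
  define r where "r = cmod x"
  define \<alpha> where "\<alpha> = arg2pi x"
  define p where "p = cmod y"
  define \<beta> where "\<beta> = arg2pi y"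
  have xp: "0 < r" "0 < \<alpha>" "\<alpha> < \<theta>" "x = rcis r \<alpha>" using sector_polar[OF x] by (auto simp: r_def \<alpha>_def)
  have yp: "0 < p" "0 < \<beta>" "\<beta> < \<theta>" "y = rcis p \<beta>" using sector_polar[OF y] by (auto simp: p_def \<beta>_def)
  define R where "R = r powr a"
  define P where "P = p powr a"
  have RP: "0 < R" "0 < P" using xp yp by (auto simp: R_def P_def)
  have u: "cpow x a = rcis R (a*\<alpha>)" by (simp add: cpow_rcis R_def r_def \<alpha>_def)
  have v: "cpow y a = rcis P (a*\<beta>)" by (simp add: cpow_rcis P_def p_def \<beta>_def)
  have E1: "cmod (x - y)^2 = lc r p (\<alpha> - \<beta>)" using xp yp cmod_rcis_sq by metis
  have E2: "cmod (cpow x a - cpow y a)^2 = lc R P (a*(\<alpha> - \<beta>))"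
    unfolding u v cmod_rcis_sq by (simp add: algebra_simps)
  have E3: "cmod (cpow x a - cnj (cpow y a))^2 = lc R P (a*(\<alpha> + \<beta>))"
    unfolding u v cnj_rcis cmod_rcis_sq by (simp add: algebra_simps)
  have aab: "0 < a*\<alpha>" "a*\<alpha> < pi" "0 < a*\<beta>" "a*\<beta> < pi"
    using xp yp af ath by (auto intro: mult_strict_left_mono[of _ \<theta> a, simplified ath])
  have E23: "lc R P (a*(\<alpha> - \<beta>)) \<le> lc R P (a*(\<alpha> + \<beta>))"
    using E2_le_E3[OF RP aab] by (simp add: algebra_simps)
  define F where "F z = cmod (x - z) + cmod (z - y)" for z
  have goal: "\<exists>z\<in>frontier (sector \<theta>). lc R P (a*(\<alpha> - \<beta>)) * (F z)^2 \<le> lc r p (\<alpha> - \<beta>) * lc R P (a*(\<alpha> + \<beta>))"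
  proof (cases "pi \<le> \<bar>\<alpha> - \<beta>\<bar>")
    case True
    have "\<exists>t\<ge>0. F (rcis t 0) = cmod (x - y)"
    proof (cases "\<alpha> \<le> \<beta>")
      case True2: True
      then have "\<alpha> + pi \<le> \<beta>" using True by auto
      then obtain t where "0 \<le> t" "cmod (rcis r \<alpha> - rcis t 0) + cmod (rcis t 0 - rcis p \<beta>) = cmod (rcis r \<alpha> - rcis p \<beta>)"
        using cross_point[of r p \<alpha> \<beta>] xp yp th by auto
      then show ?thesis unfolding F_def xp(4) yp(4) by blast
    next
      case False
      then have "\<beta> + pi \<le> \<alpha>" using True by auto
      then obtain t where "0 \<le> t" "cmod (rcis p \<beta> - rcis t 0) + cmod (rcis t 0 - rcis r \<alpha>) = cmod (rcis p \<beta> - rcis r \<alpha>)"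
        using cross_point[of p r \<beta> \<alpha>] xp yp th by auto
      then show ?thesis unfolding F_def xp(4) yp(4) by (metis add.commute norm_minus_commute)
    qed
    then obtain t where t: "0 \<le> t" "F (rcis t 0) = cmod (x - y)" by blast
    have "lc R P (a*(\<alpha> - \<beta>)) * (F (rcis t 0))^2 \<le> lc r p (\<alpha> - \<beta>) * lc R P (a*(\<alpha> + \<beta>))"
      unfolding t E1 using E23 lc_nonneg[of r p "\<alpha> - \<beta>"] by (simp add: mult.commute mult_left_mono)
    then show ?thesis using frontier_sector_rays(1)[OF th t(1)] by blast
  next
    case nc: False
    show ?thesis
    proof (cases "\<alpha> + \<beta> \<le> pi")
      case True
      obtain t where t: "0 \<le> t" "cmod (rcis r \<alpha> - rcis t 0) + cmod (rcis t 0 - rcis p \<beta>) = sqrt (lc r p (\<alpha>+\<beta>))"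
        using refl_point[of r p \<alpha> \<beta>] xp yp True by auto
      have Ft: "(F (rcis t 0))^2 = lc r p (\<alpha>+\<beta>)" unfolding F_def xp(4) yp(4) t(2) by (simp add: lc_nonneg)
      have "lc R P (a*(\<alpha> - \<beta>)) * lc r p (\<alpha>+\<beta>) \<le> lc r p (\<alpha> - \<beta>) * lc R P (a*(\<alpha> + \<beta>))"
        unfolding R_def P_def by (rule upper_E_refl) (use af xp yp True in auto)
      then have "lc R P (a*(\<alpha> - \<beta>)) * (F (rcis t 0))^2 \<le> lc r p (\<alpha> - \<beta>) * lc R P (a*(\<alpha> + \<beta>))"
        by (simp only: Ft)
      then show ?thesis using frontier_sector_rays(1)[OF th t(1)] by blast
    next
      case False2: False
      show ?thesis
      proof (cases "2*\<theta> - (\<alpha> + \<beta>) \<le> pi")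
        case True
        obtain t where t: "0 \<le> t" "cmod (rcis r (\<theta>-\<alpha>) - rcis t 0) + cmod (rcis t 0 - rcis p (\<theta>-\<beta>)) = sqrt (lc r p ((\<theta>-\<alpha>)+(\<theta>-\<beta>)))"
          using refl_point[of r p "\<theta>-\<alpha>" "\<theta>-\<beta>"] xp yp True by auto
        have c1: "cmod (rcis r \<alpha> - rcis t \<theta>) = cmod (rcis r (\<theta>-\<alpha>) - rcis t 0)"
          unfolding cmod_rcis using lc_minus[of r t "\<alpha> - \<theta>"] by simp
        have c2: "cmod (rcis t \<theta> - rcis p \<beta>) = cmod (rcis t 0 - rcis p (\<theta>-\<beta>))"
          unfolding cmod_rcis using lc_minus[of t p "\<theta> - \<beta>"] by simp
        have Ft: "(F (rcis t \<theta>))^2 = lc r p (2*\<theta> - (\<alpha>+\<beta>))"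
          unfolding F_def xp(4) yp(4) c1 c2 t(2) by (simp add: lc_nonneg algebra_simps)
        have e: "sin (a*(\<alpha>+\<beta>)/2)^2 = sin (a * (2*\<theta> - (\<alpha>+\<beta>))/2)^2"
        proof -
          have "a * (2*\<theta> - (\<alpha>+\<beta>))/2 = a*\<theta> - a*(\<alpha>+\<beta>)/2" by (simp add: field_simps)
          then have "a * (2*\<theta> - (\<alpha>+\<beta>))/2 = pi - a*(\<alpha>+\<beta>)/2" using ath by simp
          then show ?thesis by (simp only: sin_pi_minus)
        qed
        have "lc R P (a*(\<alpha> - \<beta>)) * lc r p (2*\<theta> - (\<alpha>+\<beta>)) \<le> lc r p (\<alpha> - \<beta>) * lc R P (a*(\<alpha> + \<beta>))"
          unfolding R_def P_def by (rule upper_E_refl[OF _ _ _ _ _ _ e]) (use af xp yp True in auto)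
        then have "lc R P (a*(\<alpha> - \<beta>)) * (F (rcis t \<theta>))^2 \<le> lc r p (\<alpha> - \<beta>) * lc R P (a*(\<alpha> + \<beta>))"
          by (simp only: Ft)
        then show ?thesis using frontier_sector_rays(2)[OF th t(1)] by blast
      next
        case False3: False
        have "F (rcis 0 0) = r + p" unfolding F_def by (simp add: r_def p_def)
        then have Ft: "(F (rcis 0 0))^2 = lc r p pi" by (simp add: lc_def power2_eq_square algebra_simps)
        have w1: "a*(pi/2) \<le> a*(\<alpha>+\<beta>)/2" using False2 af by simp
        have w2: "a*(\<alpha>+\<beta>)/2 \<le> pi - a*(pi/2)"
        proof -
          have "a*(\<alpha>+\<beta>) \<le> a*(2*\<theta> - pi)" using False3 af by (intro mult_left_mono) auto
          moreover have "a*(2*\<theta> - pi) = 2*pi - a*pi" using ath by (simp add: algebra_simps)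
          ultimately show ?thesis by linarith
        qed
        have "lc R P (a*(\<alpha> - \<beta>)) * lc r p pi \<le> lc r p (\<alpha> - \<beta>) * lc R P (a*(\<alpha> + \<beta>))"
          unfolding R_def P_def by (rule upper_E_vertex[OF _ _ _ _ _ w1 w2]) (use af xp yp nc in auto)
        then have "lc R P (a*(\<alpha> - \<beta>)) * (F (rcis 0 0))^2 \<le> lc r p (\<alpha> - \<beta>) * lc R P (a*(\<alpha> + \<beta>))"
          by (simp only: Ft)
        then show ?thesis using frontier_sector_rays(1)[OF th order_refl] by blast
      qed
    qed
  qed
  then show ?thesis unfolding a_def[symmetric] E1 E2 E3 F_def by simp
qed
lemma D_facts:
  fixes \<theta> :: real and x y :: complex
  assumes th: "pi < \<theta>" "\<theta> < 2*pi"
  defines "D \<equiv> Inf ((\<lambda>z. cmod (x - z) + cmod (z - y)) ` frontier (sector \<theta>))"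
  shows "cmod (x - y) \<le> D"
    and "z \<in> frontier (sector \<theta>) \<Longrightarrow> D \<le> cmod (x - z) + cmod (z - y)"
    and "(\<And>z. z \<in> frontier (sector \<theta>) \<Longrightarrow> K \<le> cmod (x - z) + cmod (z - y)) \<Longrightarrow> K \<le> D"
proof -
  have ne: "(\<lambda>z. cmod (x - z) + cmod (z - y)) ` frontier (sector \<theta>) \<noteq> {}"
    using frontier_sector_rays(1)[OF th order_refl] by blast
  have bdd: "bdd_below ((\<lambda>z. cmod (x - z) + cmod (z - y)) ` frontier (sector \<theta>))"
    by (rule bdd_belowI[of _ 0]) auto
  show "(\<And>z. z \<in> frontier (sector \<theta>) \<Longrightarrow> K \<le> cmod (x - z) + cmod (z - y)) \<Longrightarrow> K \<le> D"
    unfolding D_def by (rule cInf_greatest[OF ne]) auto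
  have tri: "cmod (x - y) \<le> cmod (x - z) + cmod (z - y)" for z
    using norm_triangle_ineq[of "x - z" "z - y"] by simp
  show "cmod (x - y) \<le> D"
    unfolding D_def by (rule cInf_greatest[OF ne]) (use tri in auto)
  show "z \<in> frontier (sector \<theta>) \<Longrightarrow> D \<le> cmod (x - z) + cmod (z - y)"
    unfolding D_def by (rule cInf_lower) (use bdd in auto)
qed

lemma T_formula:
  fixes \<theta> :: real and x y :: complex
  assumes th: "pi < \<theta>" "\<theta> < 2*pi" and x: "x \<in> sector \<theta>" and y: "y \<in> sector \<theta>"
  shows "cmod (cpow x (pi/\<theta>) - cpow y (pi/\<theta>)) < cmod (cpow x (pi/\<theta>) - cnj (cpow y (pi/\<theta>)))"
    and "tanh (rho_sector \<theta> x y / 2) = cmod (cpow x (pi/\<theta>) - cpow y (pi/\<theta>)) / cmod (cpow x (pi/\<theta>) - cnj (cpow y (pi/\<theta>)))"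
proof -
  define a where "a = pi/\<theta>"
  have af: "1/2 < a" "a < 1" "pi/a = \<theta>" "0 < a" using a_facts[OF th] by (auto simp: a_def)
  have ath: "a * \<theta> = pi" using th by (simp add: a_def)
  define r where "r = cmod x"
  define \<alpha> where "\<alpha> = arg2pi x"
  define p where "p = cmod y"
  define \<beta> where "\<beta> = arg2pi y"
  have xp: "0 < r" "0 < \<alpha>" "\<alpha> < \<theta>" "x = rcis r \<alpha>" using sector_polar[OF x] by (auto simp: r_def \<alpha>_def)
  have yp: "0 < p" "0 < \<beta>" "\<beta> < \<theta>" "y = rcis p \<beta>" using sector_polar[OF y] by (auto simp: p_def \<beta>_def)
  define R where "R = r powr a"
  define P where "P = p powr a"
  have RP: "0 < R" "0 < P" using xp yp by (auto simp: R_def P_def)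
  have u: "cpow x a = rcis R (a*\<alpha>)" by (simp add: cpow_rcis R_def r_def \<alpha>_def)
  have v: "cpow y a = rcis P (a*\<beta>)" by (simp add: cpow_rcis P_def p_def \<beta>_def)
  have E2: "cmod (cpow x a - cpow y a)^2 = lc R P (a*\<alpha> - a*\<beta>)"
    unfolding u v cmod_rcis_sq by simp
  have E3: "cmod (cpow x a - cnj (cpow y a))^2 = lc R P (a*\<alpha> + a*\<beta>)"
    unfolding u v cnj_rcis cmod_rcis_sq by simp
  have aab: "0 < a*\<alpha>" "a*\<alpha> < pi" "0 < a*\<beta>" "a*\<beta> < pi"
    using xp yp af ath by (auto intro: mult_strict_left_mono[of _ \<theta> a, simplified ath])
  have "cmod (cpow x a - cpow y a)^2 < cmod (cpow x a - cnj (cpow y a))^2"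
    unfolding E2 E3 by (rule E2_le_E3[OF RP aab])
  then have lt: "cmod (cpow x a - cpow y a) < cmod (cpow x a - cnj (cpow y a))"
    by (rule power_less_imp_less_base) simp
  then show "cmod (cpow x (pi/\<theta>) - cpow y (pi/\<theta>)) < cmod (cpow x (pi/\<theta>) - cnj (cpow y (pi/\<theta>)))"
    by (simp add: a_def)
  define q where "q = cmod (cpow x a - cpow y a) / cmod (cpow x a - cnj (cpow y a))"
  have d0: "0 < cmod (cpow x a - cnj (cpow y a))" using order.strict_trans1[OF norm_ge_zero lt] .
  have q: "0 \<le> q" "q < 1" using lt d0 by (auto simp: q_def divide_less_eq)
  have "tanh (rho_sector \<theta> x y / 2) = tanh (artanh q)"
    by (simp add: rho_sector_def rho_H_def q_def a_def)
  also have "\<dots> = q" using q by (intro tanh_artanh_real) auto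
  finally show "tanh (rho_sector \<theta> x y / 2) = cmod (cpow x (pi/\<theta>) - cpow y (pi/\<theta>)) / cmod (cpow x (pi/\<theta>) - cnj (cpow y (pi/\<theta>)))"
    by (simp add: q_def a_def)
qed

lemma main_bounds:
  fixes \<theta> :: real and x y :: complex
  assumes th: "pi < \<theta>" "\<theta> < 2*pi" and x: "x \<in> sector \<theta>" and y: "y \<in> sector \<theta>"
  shows "(pi / \<theta>) * s_metric (sector \<theta>) x y \<le> tanh (rho_sector \<theta> x y / 2)"
    and "tanh (rho_sector \<theta> x y / 2) \<le> s_metric (sector \<theta>) x y"
proof -
  define a where "a = pi/\<theta>"
  have af: "1/2 < a" "a < 1" "0 < a" using a_facts[OF th] by (auto simp: a_def)
  define D where "D = Inf ((\<lambda>z. cmod (x - z) + cmod (z - y)) ` frontier (sector \<theta>))"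
  have s: "s_metric (sector \<theta>) x y = cmod (x - y) / D" unfolding s_metric_def D_def by (rule refl)
  define U where "U = cmod (cpow x a - cpow y a)"
  define V where "V = cmod (cpow x a - cnj (cpow y a))"
  have UV: "U < V" "0 \<le> U" unfolding U_def V_def a_def using T_formula(1)[OF th x y] by auto
  have T: "tanh (rho_sector \<theta> x y / 2) = U / V" unfolding U_def V_def a_def by (rule T_formula(2)[OF th x y])
  have Dge: "cmod (x - y) \<le> D" unfolding D_def by (rule D_facts(1)[OF th])
  show "(pi / \<theta>) * s_metric (sector \<theta>) x y \<le> tanh (rho_sector \<theta> x y / 2)"
  proof (cases "x = y")
    case True
    have "s_metric (sector \<theta>) x y = 0" using True s by simp
    moreover have "0 \<le> tanh (rho_sector \<theta> x y / 2)" unfolding T using UV by simp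
    ultimately show ?thesis by simp
  next
    case False
    then have xy: "0 < cmod (x - y)" by simp
    have key: "a * cmod (x - y) * V \<le> (cmod (x - z) + cmod (z - y)) * U" if z: "z \<in> frontier (sector \<theta>)" for z
    proof -
      have e1: "(a * cmod (x - y) * V)^2 = a^2 * (cmod (x - y)^2 * V^2)" by (simp add: power_mult_distrib)
      have e2: "((cmod (x - z) + cmod (z - y)) * U)^2 = (cmod (x - z) + cmod (z - y))^2 * U^2"
        by (simp add: power_mult_distrib)
      have "(a * cmod (x - y) * V)^2 \<le> ((cmod (x - z) + cmod (z - y)) * U)^2"
        unfolding e1 e2 unfolding U_def V_def a_def by (rule F_lower[OF th x y z])
      then show ?thesis by (rule power2_le_imp_le) (simp add: U_def)
    qed
    have z0: "rcis 0 0 \<in> frontier (sector \<theta>)" by (rule frontier_sector_rays(1)[OF th order_refl])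
    have "0 < a * cmod (x - y) * V" using xy UV af by simp
    then have "0 < (cmod (x - rcis 0 0) + cmod (rcis 0 0 - y)) * U" using key[OF z0] by linarith
    then have U0: "0 < U" using UV(2) by (auto simp: zero_less_mult_iff)
    define K where "K = a * cmod (x - y) * V / U"
    have KD: "K \<le> D" unfolding D_def
    proof (rule D_facts(3)[OF th])
      fix z assume "z \<in> frontier (sector \<theta>)"
      then have "a * cmod (x - y) * V \<le> (cmod (x - z) + cmod (z - y)) * U" by (rule key)
      then show "K \<le> cmod (x - z) + cmod (z - y)" unfolding K_def using U0 by (simp add: pos_divide_le_eq)
    qed
    have K0: "0 < K" using xy UV af U0 by (simp add: K_def)
    have "a * (cmod (x - y) / D) \<le> a * (cmod (x - y) / K)"
      using KD K0 xy af by (intro mult_left_mono divide_left_mono) auto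
    also have "\<dots> = U / V" using K0 U0 UV xy af by (simp add: K_def field_simps)
    finally show ?thesis by (simp add: s T a_def)
  qed
  show "tanh (rho_sector \<theta> x y / 2) \<le> s_metric (sector \<theta>) x y"
  proof (cases "x = y")
    case True
    have "s_metric (sector \<theta>) x y = 0" using True s by simp
    moreover have "tanh (rho_sector \<theta> x y / 2) = 0" unfolding T U_def using True by simp
    ultimately show ?thesis by simp
  next
    case False
    then have xy: "0 < cmod (x - y)" by simp
    obtain z where z: "z \<in> frontier (sector \<theta>)"
      and zz: "cmod (cpow x (pi/\<theta>) - cpow y (pi/\<theta>))^2 * (cmod (x - z) + cmod (z - y))^2
         \<le> cmod (x - y)^2 * cmod (cpow x (pi/\<theta>) - cnj (cpow y (pi/\<theta>)))^2"
      using F_upper[OF th x y] by blast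
    define F where "F = cmod (x - z) + cmod (z - y)"
    have "(U * F)^2 \<le> (cmod (x - y) * V)^2" using zz
      unfolding power_mult_distrib unfolding U_def V_def a_def F_def .
    then have UF: "U * F \<le> cmod (x - y) * V" by (rule power2_le_imp_le) (simp add: V_def)
    have DF: "D \<le> F" unfolding D_def F_def by (rule D_facts(2)[OF th z])
    have D0: "0 < D" using Dge xy by linarith
    have V0: "0 < V" using UV by linarith
    have "U / V \<le> cmod (x - y) / F" using UF V0 D0 DF by (simp add: field_simps)
    also have "\<dots> \<le> cmod (x - y) / D" using D0 DF xy by (intro divide_left_mono) auto
    finally show ?thesis by (simp add: s T)
  qed
qed
lemma bisector_pts:
  fixes \<theta> R :: real
  assumes th: "pi < \<theta>" "\<theta> < 2*pi" and R: "0 < R"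
  shows "rcis R (\<theta>/2) \<in> sector \<theta>"
    and "tanh (rho_sector \<theta> (rcis 1 (\<theta>/2)) (rcis R (\<theta>/2)) / 2) = \<bar>1 - R powr (pi/\<theta>)\<bar> / (1 + R powr (pi/\<theta>))"
    and "\<bar>1 - R\<bar> / (1 + R) \<le> s_metric (sector \<theta>) (rcis 1 (\<theta>/2)) (rcis R (\<theta>/2))"
    and "s_metric (sector \<theta>) (rcis 1 (\<theta>/2)) (rcis R (\<theta>/2)) \<le> 1"
    and "0 \<le> s_metric (sector \<theta>) (rcis 1 (\<theta>/2)) (rcis R (\<theta>/2))"
proof -
  define a where "a = pi/\<theta>"
  have ath: "a * (\<theta>/2) = pi/2" using th by (simp add: a_def)
  have arg: "arg2pi (rcis t (\<theta>/2)) = \<theta>/2" if "0 < t" for t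
    by (rule arg2pi_rcis) (use that th in auto)
  have mem: "rcis t (\<theta>/2) \<in> sector \<theta>" if "0 < t" for t
    using arg[OF that] that th by (auto simp: sector_def rcis_def)
  show "rcis R (\<theta>/2) \<in> sector \<theta>" using mem[OF R] .
  have x: "rcis 1 (\<theta>/2) \<in> sector \<theta>" using mem[of 1] by simp
  have cp: "cpow (rcis t (\<theta>/2)) a = rcis (t powr a) (pi/2)" if "0 < t" for t
    unfolding cpow_rcis arg[OF that] ath using that by simp
  have "tanh (rho_sector \<theta> (rcis 1 (\<theta>/2)) (rcis R (\<theta>/2)) / 2)
      = cmod (cpow (rcis 1 (\<theta>/2)) a - cpow (rcis R (\<theta>/2)) a) / cmod (cpow (rcis 1 (\<theta>/2)) a - cnj (cpow (rcis R (\<theta>/2)) a))"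
    unfolding a_def by (rule T_formula(2)[OF th x mem[OF R]])
  also have "\<dots> = cmod (rcis 1 (pi/2) - rcis (R powr a) (pi/2)) / cmod (rcis 1 (pi/2) - rcis (R powr a) (-(pi/2)))"
    using cp[of 1] cp[OF R] by (simp add: cnj_rcis)
  also have "\<dots> = \<bar>1 - R powr a\<bar> / (1 + R powr a)"
  proof -
    have "cmod (rcis 1 (pi/2) - rcis (R powr a) (pi/2)) = sqrt (lc 1 (R powr a) 0)" unfolding cmod_rcis by simp
    also have "lc 1 (R powr a) 0 = (1 - R powr a)^2" by (simp add: lc_def power2_eq_square algebra_simps)
    finally have n1: "cmod (rcis 1 (pi/2) - rcis (R powr a) (pi/2)) = \<bar>1 - R powr a\<bar>" by simp
    have "cmod (rcis 1 (pi/2) - rcis (R powr a) (-(pi/2))) = sqrt (lc 1 (R powr a) pi)" unfolding cmod_rcis by simp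
    also have "\<dots> = 1 + R powr a" by (rule lc_pi) auto
    finally show ?thesis using n1 by simp
  qed
  finally show "tanh (rho_sector \<theta> (rcis 1 (\<theta>/2)) (rcis R (\<theta>/2)) / 2) = \<bar>1 - R powr (pi/\<theta>)\<bar> / (1 + R powr (pi/\<theta>))"
    by (simp add: a_def)
  define D where "D = Inf ((\<lambda>z. cmod (rcis 1 (\<theta>/2) - z) + cmod (z - rcis R (\<theta>/2))) ` frontier (sector \<theta>))"
  have s: "s_metric (sector \<theta>) (rcis 1 (\<theta>/2)) (rcis R (\<theta>/2)) = cmod (rcis 1 (\<theta>/2) - rcis R (\<theta>/2)) / D"
    unfolding s_metric_def D_def by (rule refl)
  have dxy: "cmod (rcis 1 (\<theta>/2) - rcis R (\<theta>/2)) = \<bar>1 - R\<bar>"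
  proof -
    have "cmod (rcis 1 (\<theta>/2) - rcis R (\<theta>/2)) = sqrt (lc 1 R 0)" unfolding cmod_rcis by simp
    also have "lc 1 R 0 = (1 - R)^2" by (simp add: lc_def power2_eq_square algebra_simps)
    finally show ?thesis by simp
  qed
  have Dge: "\<bar>1 - R\<bar> \<le> D" unfolding D_def dxy[symmetric] by (rule D_facts(1)[OF th])
  have Dle: "D \<le> 1 + R"
  proof -
    have "D \<le> cmod (rcis 1 (\<theta>/2) - rcis 0 0) + cmod (rcis 0 0 - rcis R (\<theta>/2))"
      unfolding D_def by (rule D_facts(2)[OF th frontier_sector_rays(1)[OF th order_refl]])
    also have "\<dots> = 1 + R" using R by simp
    finally show ?thesis .
  qed
  have D0: "0 \<le> D" using Dge by linarith
  show "0 \<le> s_metric (sector \<theta>) (rcis 1 (\<theta>/2)) (rcis R (\<theta>/2))" unfolding s dxy using D0 by simp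
  show "s_metric (sector \<theta>) (rcis 1 (\<theta>/2)) (rcis R (\<theta>/2)) \<le> 1"
    unfolding s dxy using Dge D0 by (cases "D = 0") (auto simp: divide_le_eq_1)
  show "\<bar>1 - R\<bar> / (1 + R) \<le> s_metric (sector \<theta>) (rcis 1 (\<theta>/2)) (rcis R (\<theta>/2))"
  proof (cases "R = 1")
    case True
    then show ?thesis unfolding s dxy by simp
  next
    case False
    then have "0 < \<bar>1 - R\<bar>" by simp
    then have "0 < D" using Dge by linarith
    then show ?thesis unfolding s dxy using Dle by (intro divide_left_mono) (auto simp: R)
  qed
qed

lemma powr_bounds:
  fixes R a :: real
  assumes "0 < R" "R < 1" "0 < a" "a < 1"
  shows "R \<le> R powr a" "R powr a < 1" "1 - R powr a \<le> a * (1 - R) / R"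
proof -
  have l: "ln R < 0" using assms by simp
  have e: "R powr a = exp (a * ln R)" using assms by (simp add: powr_def)
  have "ln R \<le> a * ln R" using l assms by (simp add: mult_le_cancel_right1)
  then have "exp (ln R) \<le> exp (a * ln R)" by simp
  then show "R \<le> R powr a" using assms e by simp
  show "R powr a < 1" using e l assms by (simp add: mult_pos_neg)
  have "ln (1/R) \<le> 1/R - 1" using assms by (intro ln_le_minus_one) auto
  then have "1 - 1/R \<le> ln R" using assms by (simp add: ln_div)
  then have "a * (1 - 1/R) \<le> a * ln R" using assms by (intro mult_left_mono) auto
  moreover have "1 + a * ln R \<le> exp (a * ln R)" by (rule exp_ge_add_one_self)
  ultimately have "1 - R powr a \<le> - a * (1 - 1/R)" unfolding e by linarith
  also have "\<dots> = a * (1 - R) / R" using assms by (simp add: field_simps)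
  finally show "1 - R powr a \<le> a * (1 - R) / R" .
qed
theorem theorem4p6:
  fixes \<theta> :: real
  assumes "pi < \<theta>" and "\<theta> < 2 * pi"
  shows "(\<forall>x\<in>sector \<theta>. \<forall>y\<in>sector \<theta>.
            (pi / \<theta>) * s_metric (sector \<theta>) x y \<le> tanh (rho_sector \<theta> x y / 2) \<and>
            tanh (rho_sector \<theta> x y / 2) \<le> s_metric (sector \<theta>) x y)
       \<and> (\<forall>c > pi / \<theta>. \<exists>x\<in>sector \<theta>. \<exists>y\<in>sector \<theta>.
            tanh (rho_sector \<theta> x y / 2) < c * s_metric (sector \<theta>) x y)
       \<and> (\<forall>c < 1. \<exists>x\<in>sector \<theta>. \<exists>y\<in>sector \<theta>.
            c * s_metric (sector \<theta>) x y < tanh (rho_sector \<theta> x y / 2))"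
proof (intro conjI ballI allI impI)
  have th: "pi < \<theta>" "\<theta> < 2*pi" using assms by auto
  define a where "a = pi/\<theta>"
  have af: "1/2 < a" "a < 1" "0 < a" using a_facts[OF th] by (auto simp: a_def)
  have x1: "rcis 1 (\<theta>/2) \<in> sector \<theta>" using bisector_pts(1)[OF th, of 1] by simp
  fix x y assume x: "x \<in> sector \<theta>" and y: "y \<in> sector \<theta>"
  show "(pi / \<theta>) * s_metric (sector \<theta>) x y \<le> tanh (rho_sector \<theta> x y / 2)"
    by (rule main_bounds(1)[OF th x y])
  show "tanh (rho_sector \<theta> x y / 2) \<le> s_metric (sector \<theta>) x y"
    by (rule main_bounds(2)[OF th x y])
next
  have th: "pi < \<theta>" "\<theta> < 2*pi" using assms by auto
  define a where "a = pi/\<theta>"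
  have af: "1/2 < a" "a < 1" "0 < a" using a_facts[OF th] by (auto simp: a_def)
  have x1: "rcis 1 (\<theta>/2) \<in> sector \<theta>" using bisector_pts(1)[OF th, of 1] by simp
  fix c :: real assume c: "pi / \<theta> < c"
  then have ca: "a < c" by (simp add: a_def)
  define q where "q = a/c"
  have ac: "0 < q" "q < 1" using ca af by (auto simp: q_def)
  define R where "R = (1 + q)/2"
  have R1: "0 < R" unfolding R_def using ac by simp
  have R2: "R < 1" unfolding R_def using ac by simp
  have R3: "q < R" unfolding R_def using ac by simp
  have R: "0 < R" "R < 1" "a/c < R" using R1 R2 R3 by (auto simp: q_def)
  have aR: "a < c * R" using R(3) ca af by (simp add: divide_less_eq mult.commute)
  have pb: "R \<le> R powr a" "R powr a < 1" "1 - R powr a \<le> a * (1 - R) / R"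
    using powr_bounds[OF R(1,2) af(3,2)] by auto
  have T: "tanh (rho_sector \<theta> (rcis 1 (\<theta>/2)) (rcis R (\<theta>/2)) / 2) = (1 - R powr a) / (1 + R powr a)"
    using bisector_pts(2)[OF th R(1)] pb by (simp add: a_def)
  have s: "(1 - R) / (1 + R) \<le> s_metric (sector \<theta>) (rcis 1 (\<theta>/2)) (rcis R (\<theta>/2))"
    using bisector_pts(3)[OF th R(1)] R by simp
  have "(1 - R powr a) / (1 + R powr a) \<le> (a * (1 - R) / R) / (1 + R)"
    using pb R by (intro frac_le) auto
  also have "\<dots> < c * ((1 - R) / (1 + R))"
  proof -
    have "a * (1 - R) < (c * R) * (1 - R)" using aR R by (intro mult_strict_right_mono) auto
    then have "a * (1 - R) / R < (c * R) * (1 - R) / R" using R by (intro divide_strict_right_mono) auto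
    also have "(c * R) * (1 - R) / R = c * (1 - R)" using R by simp
    finally have "a * (1 - R) / R / (1 + R) < c * (1 - R) / (1 + R)" using R by (intro divide_strict_right_mono) auto
    then show ?thesis by simp
  qed
  also have "\<dots> \<le> c * s_metric (sector \<theta>) (rcis 1 (\<theta>/2)) (rcis R (\<theta>/2))"
    using s ca af by (intro mult_left_mono) auto
  finally show "\<exists>x\<in>sector \<theta>. \<exists>y\<in>sector \<theta>. tanh (rho_sector \<theta> x y / 2) < c * s_metric (sector \<theta>) x y"
    using x1 bisector_pts(1)[OF th R(1)] T by metis
next
  have th: "pi < \<theta>" "\<theta> < 2*pi" using assms by auto
  define a where "a = pi/\<theta>"
  have af: "1/2 < a" "a < 1" "0 < a" using a_facts[OF th] by (auto simp: a_def)
  have x1: "rcis 1 (\<theta>/2) \<in> sector \<theta>" using bisector_pts(1)[OF th, of 1] by simp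
  fix c :: real assume c: "c < 1"
  define M where "M = 1 + 2 / (1 - c)"
  have M: "1 < M" using c by (simp add: M_def)
  define R where "R = M powr (1/a)"
  have R: "0 < R" using M by (simp add: R_def)
  have Ra: "R powr a = M" using M af by (simp add: R_def powr_powr)
  have T: "tanh (rho_sector \<theta> (rcis 1 (\<theta>/2)) (rcis R (\<theta>/2)) / 2) = (M - 1) / (1 + M)"
    using bisector_pts(2)[OF th R] Ra M by (simp add: a_def)
  have Tc: "c < (M - 1) / (1 + M)"
  proof -
    have "c * (1 + M) < M - 1"
    proof -
      have "M * (1 - c) = 3 - c" using c by (simp add: M_def field_simps)
      then show ?thesis using c by (simp add: algebra_simps)
    qed
    then show ?thesis using M by (simp add: field_simps)
  qed
  have T0: "0 < (M - 1) / (1 + M)" using M by simp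
  have s1: "s_metric (sector \<theta>) (rcis 1 (\<theta>/2)) (rcis R (\<theta>/2)) \<le> 1"
    and s0: "0 \<le> s_metric (sector \<theta>) (rcis 1 (\<theta>/2)) (rcis R (\<theta>/2))"
    using bisector_pts(4,5)[OF th R] by auto
  have "c * s_metric (sector \<theta>) (rcis 1 (\<theta>/2)) (rcis R (\<theta>/2)) < (M - 1) / (1 + M)"
  proof (cases "c \<le> 0")
    case True
    then have "c * s_metric (sector \<theta>) (rcis 1 (\<theta>/2)) (rcis R (\<theta>/2)) \<le> 0"
      using s0 by (simp add: mult_nonpos_nonneg)
    then show ?thesis using T0 by linarith
  next
    case False
    then have "c * s_metric (sector \<theta>) (rcis 1 (\<theta>/2)) (rcis R (\<theta>/2)) \<le> c * 1"
      using s1 by (intro mult_left_mono) auto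
    then show ?thesis using Tc by linarith
  qed
  then show "\<exists>x\<in>sector \<theta>. \<exists>y\<in>sector \<theta>. c * s_metric (sector \<theta>) x y < tanh (rho_sector \<theta> x y / 2)"
    using x1 bisector_pts(1)[OF th R] T by metis
qed

end
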